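(* Let $\overline{\mathcal G_H}=\mathbb S^1_\beta\times[-\infty,\infty]_a$ with the smooth structure described in the context, let $\mu_H(\beta,a)=(1+a^2)^{-1/2}$ (extended by $0$ at $a=\pm\infty$), and let $\mathcal S_A^H(\beta,a)=(\beta+\pi+2\tan^{-1}a,\,-a)$. A function $h$ on $\overline{\mathcal G_H}$ belongs to $C^\infty_{\alpha,+}(\overline{\mathcal G_H})$ if and only if $h\in C^\infty(\overline{\mathcal G_H})$, $h=h\circ\mathcal S_A^H$, and, when $h$ is expressed in terms of the coordinates $(\beta+\tan^{-1}a,\ \mu_H)$ near $\partial\overline{\mathcal G_H}=\{a=\pm\infty\}$, all odd-order terms of the Taylor expansion of $h$ off of $\partial\overline{\mathcal G_H}$ (in the variable $\mu_H$) vanish.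
   Context: $\overline{\mathcal G_H}=\mathbb S^1_\beta\times[-\infty,\infty]_a$ is given the smooth structure of a compact manifold with boundary for which the map $\Psi_{hf}(\beta,a)=(\beta,\tan^{-1}a)$ (with $\tan^{-1}(\pm\infty)=\pm\pi/2$) is a diffeomorphism onto $\partial_+S\mathbb D_E:=\mathbb S^1_\beta\times[-\pi/2,\pi/2]_\alpha$; then $\mu_H$ is a smooth boundary defining function. Fan-beam coordinates on the boundary $\partial S\mathbb D_E$ of the unit tangent bundle of the Euclidean unit disk: $(\beta,\alpha)\in\mathbb S^1\times(\mathbb R/2\pi\mathbb Z)$ denotes the unit vector at $e^{i\beta}$ with direction $e^{i(\beta+\pi+\alpha)}$; $\partial_+S\mathbb D_E$ corresponds to $\alpha\in[-\pi/2,\pi/2]$ (inward pointing), $\partial_-S\mathbb D_E$ to $\alpha\in[\pi/2,3\pi/2]$. The scattering relation is $\mathcal S^E(\beta,\alpha)=(\beta+\pi+2\alpha,\pi-\alpha)$, and $\mathcal S^E_A(\beta,\alpha)=(\beta+\pi+2\alpha,-\alpha)$. For $u$ on $\partial_+S\mathbb D_E$, $A_+u$ is the function on $\partial S\mathbb D_E$ equal to $u$ on $\partial_+S\mathbb D_E$ and to $u\circ\mathcal S^E$ on $\partial_-S\mathbb D_E$. Define $C^\infty_\alpha(\partial_+S\mathbb D_E)=\{u\in C^\infty(\partial_+S\mathbb D_E): A_+u\in C^\infty(\partial S\mathbb D_E)\}$, $C^\infty_{\alpha,+}(\partial_+S\mathbb D_E)=\{u\in C^\infty_\alpha(\partial_+S\mathbb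 D_E): u\circ\mathcal S^E_A=u\}$, and $C^\infty_{\alpha,+}(\overline{\mathcal G_H}):=\Psi_{hf}^*C^\infty_{\alpha,+}(\partial_+S\mathbb D_E)=\{u\circ\Psi_{hf}\}$. *)

theory Defs
  imports "HOL-Analysis.Analysis"
begin

(* Functions on S^1_beta x (...) are represented by functions of a real variable beta
   that are 2pi-periodic in beta.  Values are complex (covers the real-valued case). *)

fun Ck2 :: "nat \<Rightarrow> (real \<times> real \<Rightarrow> complex) \<Rightarrow> bool" where
  "Ck2 0 f = continuous_on UNIV f"
| "Ck2 (Suc n) f = (\<exists>D1 D2. (\<forall>x. (f has_derivative (\<lambda>v. fst v *\<^sub>R D1 x + snd v *\<^sub>R D2 x)) (at x))
                            \<and> Ck2 n D1 \<and> Ck2 n D2)"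

definition smooth2 :: "(real \<times> real \<Rightarrow> complex) \<Rightarrow> bool" where
  "smooth2 f \<longleftrightarrow> (\<forall>n. Ck2 n f)"

fun atan_e :: "ereal \<Rightarrow> real" where
  "atan_e (ereal r) = arctan r"
| "atan_e PInfty = pi / 2"
| "atan_e MInfty = - (pi / 2)"

fun mu_H :: "ereal \<Rightarrow> real" where
  "mu_H (ereal a) = 1 / sqrt (1 + a\<^sup>2)"
| "mu_H PInfty = 0"
| "mu_H MInfty = 0"

(* closed fibre interval of the incoming boundary \<partial>_+ S D_E *)
definition Iplus :: "real set" where
  "Iplus = {- (pi / 2) .. pi / 2}"

(* C^infty(\<partial>_+ S D_E): u(beta, alpha), alpha in [-pi/2, pi/2], 2pi-periodic in beta,
   smooth up to the boundary (= restriction of a smooth function on R^2) *)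
definition Cinf_plus :: "(real \<Rightarrow> real \<Rightarrow> complex) \<Rightarrow> bool" where
  "Cinf_plus u \<longleftrightarrow> (\<forall>\<beta> \<alpha>. \<alpha> \<in> Iplus \<longrightarrow> u (\<beta> + 2 * pi) \<alpha> = u \<beta> \<alpha>)
     \<and> (\<exists>F. smooth2 F \<and> (\<forall>\<beta> \<alpha>. \<alpha> \<in> Iplus \<longrightarrow> F (\<beta>, \<alpha>) = u \<beta> \<alpha>))"

(* C^infty(\<partial> S D_E) = smooth functions on the torus (2pi-periodic in both variables) *)
definition Cinf_torus :: "(real \<Rightarrow> real \<Rightarrow> complex) \<Rightarrow> bool" where
  "Cinf_torus w \<longleftrightarrow> (\<forall>\<beta> \<alpha>. w (\<beta> + 2 * pi) \<alpha> = w \<beta> \<alpha> \<and> w \<beta> (\<alpha> + 2 * pi) = w \<beta> \<alpha>)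
     \<and> (\<exists>F. smooth2 F \<and> (\<forall>\<beta> \<alpha>. F (\<beta>, \<alpha>) = w \<beta> \<alpha>))"

definition alpha_rep :: "real \<Rightarrow> real" where
  "alpha_rep \<alpha> = \<alpha> - 2 * pi * of_int \<lfloor>(\<alpha> + pi / 2) / (2 * pi)\<rfloor>"

definition SE :: "real \<times> real \<Rightarrow> real \<times> real" where
  "SE p = (fst p + pi + 2 * snd p, pi - snd p)"

definition SEA :: "real \<times> real \<Rightarrow> real \<times> real" where
  "SEA p = (fst p + pi + 2 * snd p, - snd p)"

definition A_plus :: "(real \<Rightarrow> real \<Rightarrow> complex) \<Rightarrow> real \<Rightarrow> real \<Rightarrow> complex" where
  "A_plus u \<beta> \<alpha> = (let \<alpha>' = alpha_rep \<alpha> in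
      if \<alpha>' \<le> pi / 2 then u \<beta> \<alpha>' else case_prod u (SE (\<beta>, \<alpha>')))"

definition Cinf_alpha :: "(real \<Rightarrow> real \<Rightarrow> complex) \<Rightarrow> bool" where
  "Cinf_alpha u \<longleftrightarrow> Cinf_plus u \<and> Cinf_torus (A_plus u)"

definition Cinf_alpha_plus :: "(real \<Rightarrow> real \<Rightarrow> complex) \<Rightarrow> bool" where
  "Cinf_alpha_plus u \<longleftrightarrow> Cinf_alpha u \<and> (\<forall>\<beta> \<alpha>. \<alpha> \<in> Iplus \<longrightarrow> case_prod u (SEA (\<beta>, \<alpha>)) = u \<beta> \<alpha>)"

definition Psi_hf :: "real \<times> ereal \<Rightarrow> real \<times> real" where
  "Psi_hf p = (fst p, atan_e (snd p))"

(* functions on bar G_H: h(beta, a), beta real (2pi-periodic), a in [-infty, infty] *)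
definition Cinf_GH :: "(real \<Rightarrow> ereal \<Rightarrow> complex) \<Rightarrow> bool" where
  "Cinf_GH h \<longleftrightarrow> (\<exists>u. Cinf_plus u \<and> (\<forall>\<beta> a. h \<beta> a = case_prod u (Psi_hf (\<beta>, a))))"

definition Cinf_alpha_plus_GH :: "(real \<Rightarrow> ereal \<Rightarrow> complex) \<Rightarrow> bool" where
  "Cinf_alpha_plus_GH h \<longleftrightarrow> (\<exists>u. Cinf_alpha_plus u \<and> (\<forall>\<beta> a. h \<beta> a = case_prod u (Psi_hf (\<beta>, a))))"

definition SAH :: "real \<times> ereal \<Rightarrow> real \<times> ereal" where
  "SAH p = (fst p + pi + 2 * atan_e (snd p), - snd p)"

(* h expressed in the coordinates (theta, mu) = (beta + tan^{-1} a, mu_H) near the boundary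
   component a = +infty (pos) resp. a = -infty (neg): the point with coordinates (theta, mu)
   is (theta - tan^{-1} a, a), where a is the unique a > 0 (resp. a < 0) with mu_H a = mu *)
definition h_coord_pos :: "(real \<Rightarrow> ereal \<Rightarrow> complex) \<Rightarrow> real \<Rightarrow> real \<Rightarrow> complex" where
  "h_coord_pos h \<theta> \<mu> = (let a = (THE a. a > 0 \<and> mu_H a = \<mu>) in h (\<theta> - atan_e a) a)"

definition h_coord_neg :: "(real \<Rightarrow> ereal \<Rightarrow> complex) \<Rightarrow> real \<Rightarrow> real \<Rightarrow> complex" where
  "h_coord_neg h \<theta> \<mu> = (let a = (THE a. a < 0 \<and> mu_H a = \<mu>) in h (\<theta> - atan_e a) a)"

definition odd_taylor_vanish :: "(real \<Rightarrow> real \<Rightarrow> complex) \<Rightarrow> bool" where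
  "odd_taylor_vanish H \<longleftrightarrow> (\<forall>\<theta> N. \<exists>c :: nat \<Rightarrow> complex.
      (\<forall>j\<le>N. odd j \<longrightarrow> c j = 0) \<and>
      ((\<lambda>\<mu>. norm (H \<theta> \<mu> - (\<Sum>j\<le>N. c j * of_real \<mu> ^ j)) / \<mu> ^ N) \<longlongrightarrow> 0) (at_right 0))"

end

theory Submission
  imports Defs
begin


section \<open>One-dimensional smoothness classes\<close>

fun C1 :: "real set \<Rightarrow> nat \<Rightarrow> (real \<Rightarrow> 'a::real_normed_vector) \<Rightarrow> bool" where
  "C1 S 0 f = continuous_on S f"
| "C1 S (Suc n) f = (\<exists>f'. (\<forall>x\<in>S. (f has_vector_derivative f' x) (at x)) \<and> C1 S n f')"

lemma C1_Suc_imp: "C1 S (Suc n) f \<Longrightarrow> C1 S n f"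
proof (induction n arbitrary: f)
  case 0
  then obtain f' where "\<forall>x\<in>S. (f has_vector_derivative f' x) (at x)" by auto
  then have "\<forall>x\<in>S. isCont f x"
    using has_vector_derivative_continuous by blast
  then show ?case by (simp add: continuous_at_imp_continuous_on)
next
  case (Suc n)
  then obtain f' where "\<forall>x\<in>S. (f has_vector_derivative f' x) (at x)" "C1 S (Suc n) f'" by auto
  then show ?case using Suc.IH by auto
qed

lemma C1_add_imp: "C1 S (m + k) f \<Longrightarrow> C1 S m f"
proof (induction k)
  case 0 then show ?case by simp
next
  case (Suc k)
  from Suc.prems have "C1 S (Suc (m+k)) f" by (simp only: add_Suc_right)
  then show ?case using Suc.IH C1_Suc_imp by blast
qed

lemma C1_mono: "m \<le> n \<Longrightarrow> C1 S n f \<Longrightarrow> C1 S m f"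
  by (metis C1_add_imp le_add_diff_inverse)

lemma C1_subset: "C1 S n f \<Longrightarrow> T \<subseteq> S \<Longrightarrow> C1 T n f"
  by (induction n arbitrary: f) (auto intro: continuous_on_subset)

lemma C1_const: "C1 S n (\<lambda>x. c)"
proof (induction n arbitrary: c)
  case 0 then show ?case by simp
next
  case (Suc n) then show ?case
    by (auto intro!: exI[of _ "\<lambda>x. 0"] derivative_eq_intros)
qed

lemma C1_id: "C1 S n (\<lambda>x. x)"
proof (cases n)
  case 0 then show ?thesis by (simp add: continuous_on_id)
next
  case (Suc m) then show ?thesis
    by (auto intro!: exI[of _ "\<lambda>x. 1"] derivative_eq_intros C1_const)
qed

lemma C1_add: "C1 S n f \<Longrightarrow> C1 S n g \<Longrightarrow> C1 S n (\<lambda>x. f x + g x)"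
proof (induction n arbitrary: f g)
  case 0 then show ?case by (auto intro: continuous_on_add)
next
  case (Suc n)
  then obtain f' g' where "\<forall>x\<in>S. (f has_vector_derivative f' x) (at x)" "C1 S n f'"
    "\<forall>x\<in>S. (g has_vector_derivative g' x) (at x)" "C1 S n g'" by auto
  then show ?case using Suc.IH
    by (auto intro!: exI[of _ "\<lambda>x. f' x + g' x"] has_vector_derivative_add)
qed

lemma C1_minus: "C1 S n f \<Longrightarrow> C1 S n (\<lambda>x. - f x)"
proof (induction n arbitrary: f)
  case 0 then show ?case by (auto intro: continuous_on_minus)
next
  case (Suc n)
  then obtain f' where "\<forall>x\<in>S. (f has_vector_derivative f' x) (at x)" "C1 S n f'" by auto
  then show ?case using Suc.IH
    by (auto intro!: exI[of _ "\<lambda>x. - f' x"] has_vector_derivative_minus)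
qed

lemma C1_diff: "C1 S n f \<Longrightarrow> C1 S n g \<Longrightarrow> C1 S n (\<lambda>x. f x - g x)"
  using C1_add[of S n f "\<lambda>x. - g x"] C1_minus[of S n g] by simp

lemma C1_scaleR:
  fixes f :: "real \<Rightarrow> 'a::real_normed_vector"
  shows "C1 S n g \<Longrightarrow> C1 S n f \<Longrightarrow> C1 S n (\<lambda>x. g x *\<^sub>R f x)"
proof (induction n arbitrary: f g)
  case 0 then show ?case by (auto intro: continuous_on_scaleR)
next
  case (Suc n)
  then obtain f' g' where f': "\<forall>x\<in>S. (f has_vector_derivative f' x) (at x)" "C1 S n f'"
    and g': "\<forall>x\<in>S. (g has_vector_derivative g' x) (at x)" "C1 S n g'" by auto
  have f: "C1 S n f" and g: "C1 S n g" using Suc.prems C1_Suc_imp by blast+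
  have "\<forall>x\<in>S. ((\<lambda>x. g x *\<^sub>R f x) has_vector_derivative (g x *\<^sub>R f' x + g' x *\<^sub>R f x)) (at x)"
    using f' g' by (auto intro!: has_vector_derivative_scaleR simp: has_real_derivative_iff_has_vector_derivative)
  moreover have "C1 S n (\<lambda>x. g x *\<^sub>R f' x + g' x *\<^sub>R f x)"
    using Suc.IH f g f' g' by (auto intro!: C1_add)
  ultimately show ?case by auto
qed

lemma C1_mult:
  fixes f g :: "real \<Rightarrow> real"
  shows "C1 S n g \<Longrightarrow> C1 S n f \<Longrightarrow> C1 S n (\<lambda>x. g x * f x)"
  using C1_scaleR[of S n g f] by simp

lemma C1_compose:
  fixes f :: "real \<Rightarrow> 'a::real_normed_vector" and g :: "real \<Rightarrow> real"
  shows "C1 T n f \<Longrightarrow> C1 S n g \<Longrightarrow> g ` S \<subseteq> T \<Longrightarrow> C1 S n (\<lambda>x. f (g x))"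
proof (induction n arbitrary: f g)
  case 0 then show ?case
    using continuous_on_compose2[of T f S g] by auto
next
  case (Suc n)
  then obtain f' g' where f': "\<forall>x\<in>T. (f has_vector_derivative f' x) (at x)" "C1 T n f'"
    and g': "\<forall>x\<in>S. (g has_vector_derivative g' x) (at x)" "C1 S n g'" by auto
  have g: "C1 S n g" using Suc.prems C1_Suc_imp by blast
  have "\<forall>x\<in>S. ((\<lambda>x. f (g x)) has_vector_derivative (g' x *\<^sub>R f' (g x))) (at x)"
    using f' g' Suc.prems(3) vector_diff_chain_at[of g "g' _" _ f "f' (g _)"]
    by (auto simp: o_def has_real_derivative_iff_has_vector_derivative)
  moreover have "C1 S n (\<lambda>x. g' x *\<^sub>R f' (g x))"
    using Suc.IH[of f' g] Suc.prems(3) f' g' g by (auto intro!: C1_scaleR)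
  ultimately show ?case by auto
qed

lemma C1_inverse: "C1 {0<..} n (inverse :: real \<Rightarrow> real)"
proof (induction n)
  case 0 then show ?case by (auto intro!: continuous_intros)
next
  case (Suc n)
  have "\<forall>x\<in>{0<..}. (inverse has_vector_derivative (- (inverse x * inverse x))) (at x)"
  proof
    fix x :: real assume "x \<in> {0<..}"
    then have "x \<noteq> 0" by auto
    from DERIV_inverse[OF this, of UNIV] show "(inverse has_vector_derivative (- (inverse x * inverse x))) (at x)"
      by (simp add: has_real_derivative_iff_has_vector_derivative[symmetric])
  qed
  moreover have "C1 {0<..} n (\<lambda>x::real. - (inverse x * inverse x))"
    using Suc.IH by (auto intro!: C1_minus C1_mult)
  ultimately show ?case by auto
qed

lemma C1_sqrt: "C1 {0<..} n sqrt"
proof (induction n)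
  case 0 then show ?case by (auto intro!: continuous_intros)
next
  case (Suc n)
  have "\<forall>x\<in>{0<..}. (sqrt has_vector_derivative ((1/2) * inverse (sqrt x))) (at x)"
    using DERIV_real_sqrt
    by (auto simp: has_real_derivative_iff_has_vector_derivative[symmetric])
  moreover have "C1 {0<..} n (\<lambda>x::real. (1/2) * inverse (sqrt x))"
    by (rule C1_mult[OF C1_const C1_compose[OF C1_inverse Suc.IH]]) auto
  ultimately show ?case by (simp only: C1.simps) (rule exI[where x="\<lambda>x. 1/2 * inverse (sqrt x)"], simp)
qed

lemma sq_lt1: "x \<in> {-1<..<1::real} \<Longrightarrow> x * x < 1"
proof -
  assume "x \<in> {-1<..<1::real}"
  then have "\<bar>x\<bar> < 1" by auto
  then have "x\<^sup>2 < 1" using abs_square_less_1 by blast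
  then show ?thesis by (simp add: power2_eq_square)
qed

lemma sq_pos: "-1 < x \<Longrightarrow> x < 1 \<Longrightarrow> 0 < 1 - x * (x::real)"
  using sq_lt1[of x] by auto

lemma C1_arcsin_Suc: "C1 {-1<..<1} (Suc n) arcsin"
proof -
  have "\<forall>x\<in>{-1<..<1}. (arcsin has_vector_derivative (inverse (sqrt (1 - x * x)))) (at x)"
    using DERIV_arcsin
    by (auto simp: has_real_derivative_iff_has_vector_derivative[symmetric] power2_eq_square)
  moreover have "C1 {-1<..<1} n (\<lambda>x::real. inverse (sqrt (1 - x * x)))"
  proof (rule C1_compose[OF C1_inverse])
    show "C1 {- 1<..<1} n (\<lambda>x::real. sqrt (1 - x * x))"
    proof (rule C1_compose[OF C1_sqrt])
      show "C1 {- 1<..<1} n (\<lambda>x::real. 1 - x * x)"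
        by (auto intro!: C1_diff C1_const C1_mult C1_id)
      show "(\<lambda>x::real. 1 - x * x) ` {- 1<..<1} \<subseteq> {0<..}"
        by (rule image_subsetI) (use sq_lt1 sq_pos in auto)
    qed
    show "(\<lambda>x::real. sqrt (1 - x * x)) ` {- 1<..<1} \<subseteq> {0<..}"
      by (rule image_subsetI) (use sq_lt1 sq_pos in auto)
  qed
  ultimately show ?thesis by (simp only: C1.simps) (rule exI[where x="\<lambda>x. inverse (sqrt (1 - x * x))"], simp)
qed

lemma C1_arcsin: "C1 {-1<..<1} n arcsin"
  using C1_arcsin_Suc C1_Suc_imp by blast

lemma C1_cong: "open S \<Longrightarrow> (\<And>x. x \<in> S \<Longrightarrow> f x = g x) \<Longrightarrow> C1 S n f \<Longrightarrow> C1 S n g"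
proof (induction n arbitrary: f g)
  case 0 then show ?case using continuous_on_cong by (metis C1.simps(1))
next
  case (Suc n)
  then obtain f' where "\<forall>x\<in>S. (f has_vector_derivative f' x) (at x)" "C1 S n f'" by auto
  then have "\<forall>x\<in>S. (g has_vector_derivative f' x) (at x)"
    using has_vector_derivative_transform_within_open Suc.prems by metis
  then show ?case using \<open>C1 S n f'\<close> by auto
qed

definition chain :: "real set \<Rightarrow> (nat \<Rightarrow> real \<Rightarrow> 'a::real_normed_vector) \<Rightarrow> bool" where
  "chain S d \<longleftrightarrow> (\<forall>k. \<forall>x\<in>S. (d k has_vector_derivative d (Suc k) x) (at x))"

lemma chain_C1: "chain S d \<Longrightarrow> C1 S n (d k)"
proof (induction n arbitrary: k)
  case 0
  then have "\<forall>x\<in>S. isCont (d k) x"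
    unfolding chain_def using has_vector_derivative_continuous by blast
  then show ?case by (simp add: continuous_at_imp_continuous_on)
next
  case (Suc n) then show ?case unfolding chain_def by auto
qed

lemma chain_shift: "chain S d \<Longrightarrow> chain S (\<lambda>k. d (Suc k))"
  unfolding chain_def by auto

lemma chain_cont: "chain S d \<Longrightarrow> x \<in> S \<Longrightarrow> isCont (d k) x"
  unfolding chain_def using has_vector_derivative_continuous by blast

lemma C1_chain:
  assumes S: "open S" and f: "\<forall>n. C1 S n f"
  shows "\<exists>d. d 0 = f \<and> chain S d"
proof -
  define vd where "vd = (\<lambda>(g::real \<Rightarrow> 'a) x. vector_derivative g (at x))"
  have key: "C1 S (Suc n) g \<Longrightarrow> C1 S n (vd g) \<and> (\<forall>x\<in>S. (g has_vector_derivative vd g x) (at x))" for g n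
  proof -
    assume "C1 S (Suc n) g"
    then obtain g' where g': "\<forall>x\<in>S. (g has_vector_derivative g' x) (at x)" "C1 S n g'" by auto
    then have eq: "\<forall>x\<in>S. vd g x = g' x" unfolding vd_def using vector_derivative_at by blast
    then have "C1 S n (vd g)" using C1_cong[OF S, of g' "vd g"] g' by auto
    then show ?thesis using g' eq by auto
  qed
  have all: "\<forall>n. C1 S n ((vd ^^ k) f)" for k
  proof (induction k)
    case 0 then show ?case using f by simp
  next
    case (Suc k)
    show ?case
    proof
      fix n show "C1 S n ((vd ^^ Suc k) f)" using key[OF Suc.IH[rule_format, of "Suc n"]] by simp
    qed
  qed
  have "chain S (\<lambda>k. (vd ^^ k) f)"
    unfolding chain_def
  proof (intro allI ballI)
    fix k x assume "x \<in> S"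
    then show "((vd ^^ k) f has_vector_derivative (vd ^^ Suc k) f x) (at x)"
    proof -
      have "C1 S (Suc 0) ((vd ^^ k) f)" using all by blast
      from key[OF this] \<open>x \<in> S\<close> show ?thesis by simp
    qed
  qed
  then show ?thesis by (intro exI[of _ "\<lambda>k. (vd ^^ k) f"]) auto
qed




lemma vec_bound:
  fixes f :: "real \<Rightarrow> 'a::real_normed_vector"
  assumes ab: "a \<le> b"
    and der: "\<And>x. x \<in> {a..b} \<Longrightarrow> (f has_vector_derivative f' x) (at x)"
    and B: "\<And>x. x \<in> {a..b} \<Longrightarrow> norm (f' x) \<le> B"
  shows "norm (f b - f a) \<le> B * (b - a)"
proof -
  have "norm (f b - f a) \<le> B * norm (b - a)"
  proof (rule differentiable_bound[where f'="\<lambda>x h. h *\<^sub>R f' x"])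
    show "convex {a..b}" by simp
    show "(f has_derivative (\<lambda>h. h *\<^sub>R f' x)) (at x within {a..b})" if "x \<in> {a..b}" for x
      using der[OF that] unfolding has_vector_derivative_def
      by (rule has_derivative_at_withinI)
    show "onorm (\<lambda>h. h *\<^sub>R f' x) \<le> B" if "x \<in> {a..b}" for x
      using onorm_scaleR_left[OF bounded_linear_ident, of "f' x"] onorm_id[where 'a=real] B[OF that] by simp
  qed (use ab in auto)
  then show ?thesis using ab by simp
qed

lemma taylor_at0:
  fixes d :: "nat \<Rightarrow> real \<Rightarrow> 'a::real_normed_vector"
  assumes ch: "chain S d" and S: "open S" "0 \<in> S"
  shows "((\<lambda>x. norm (d 0 x - (\<Sum>j\<le>N. (x^j / fact j) *\<^sub>R d j 0)) / \<bar>x\<bar>^N) \<longlongrightarrow> 0) (at 0)"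
  using ch
proof (induction N arbitrary: d)
  case 0
  have "isCont (d 0) 0" using chain_cont[OF 0 S(2)] .
  then have "((\<lambda>x. d 0 x - d 0 0) \<longlongrightarrow> 0) (at 0)"
    using LIM_zero isCont_def by blast
  then show ?case using tendsto_norm_zero by force
next
  case (Suc N)
  define r where "r x = d 1 x - (\<Sum>j\<le>N. (x^j / fact j) *\<^sub>R d (Suc j) 0)" for x
  define g where "g x = d 0 x - (\<Sum>j\<le>Suc N. (x^j / fact j) *\<^sub>R d j 0)" for x
  have IH: "((\<lambda>x. norm (r x) / \<bar>x\<bar>^N) \<longlongrightarrow> 0) (at 0)"
    using Suc.IH[OF chain_shift[OF Suc.prems]] unfolding r_def by simp
  have r0: "r 0 = 0"
    unfolding r_def by (simp add: zero_power sum.atMost_shift)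
  have g0: "g 0 = 0"
    unfolding g_def by (simp add: zero_power sum.atMost_shift)
  have gsum: "g x = d 0 x - d 0 0 - (\<Sum>j\<le>N. (x^(Suc j) / fact (Suc j)) *\<^sub>R d (Suc j) 0)" for x
    unfolding g_def sum.atMost_Suc_shift by (simp add: algebra_simps)
  have pder: "((\<lambda>x. (x^(Suc j) / fact (Suc j)) *\<^sub>R c) has_vector_derivative ((x^j / fact j) *\<^sub>R c)) (at x)"
    for j x and c :: 'a
  proof -
    have "((\<lambda>x. x^(Suc j)) has_real_derivative (real (Suc j) * x^j)) (at x)"
      using DERIV_pow[of "Suc j" x] by simp
    then have "((\<lambda>x. x^(Suc j) / fact (Suc j)) has_real_derivative (real (Suc j) * x^j / fact (Suc j))) (at x)"
      by (rule DERIV_cdivide)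
    moreover have "real (Suc j) * x^j / fact (Suc j) = x^j / fact j"
      by (simp add: fact_Suc del: of_nat_Suc)
    ultimately have "((\<lambda>x. x^(Suc j) / fact (Suc j)) has_real_derivative (x^j / fact j)) (at x)"
      by simp
    from has_vector_derivative_scaleR[OF this has_vector_derivative_const[of c]]
    show ?thesis by simp
  qed
  have gder: "(g has_vector_derivative r x) (at x)" if "x \<in> S" for x
  proof -
    have "((\<lambda>x. d 0 x - d 0 0 - (\<Sum>j\<le>N. (x^(Suc j) / fact (Suc j)) *\<^sub>R d (Suc j) 0))
        has_vector_derivative (d 1 x - 0 - (\<Sum>j\<le>N. (x^j / fact j) *\<^sub>R d (Suc j) 0))) (at x)"
      using Suc.prems that unfolding chain_def
      by (intro has_vector_derivative_diff has_vector_derivative_sum pder) (auto simp: has_vector_derivative_const)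
    moreover have "g = (\<lambda>x. d 0 x - d 0 0 - (\<Sum>j\<le>N. (x^(Suc j) / fact (Suc j)) *\<^sub>R d (Suc j) 0))"
      using gsum by (rule ext)
    ultimately show ?thesis unfolding r_def by simp
  qed
  show ?case
    unfolding LIM_eq
  proof (intro allI impI)
    fix e :: real assume e: "e > 0"
    obtain s1 where s1: "s1 > 0" "\<And>x. x \<noteq> 0 \<Longrightarrow> norm x < s1 \<Longrightarrow> norm (r x) / \<bar>x\<bar>^N < e/2"
    proof -
      from IH[unfolded LIM_eq, rule_format, of "e/2"] e obtain s where
        "s > 0" "\<forall>x. x \<noteq> 0 \<and> norm (x - 0) < s \<longrightarrow> norm (norm (r x) / \<bar>x\<bar> ^ N - 0) < e/2"
        by auto
      then show ?thesis using that[of s] by auto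
    qed
    obtain s2 where s2: "s2 > 0" "ball 0 s2 \<subseteq> S"
      using S openE by blast
    have rb: "norm (r y) \<le> e/2 * \<bar>x\<bar>^N" if "\<bar>y\<bar> \<le> \<bar>x\<bar>" "\<bar>x\<bar> < s1" for x y
    proof (cases "y = 0")
      case True then show ?thesis using r0 e by simp
    next
      case False
      then have "norm (r y) / \<bar>y\<bar>^N < e/2" using s1 that by auto
      then have "norm (r y) \<le> e/2 * \<bar>y\<bar>^N" using False by (simp add: divide_less_eq)
      also have "\<dots> \<le> e/2 * \<bar>x\<bar>^N"
        using that e by (intro mult_left_mono power_mono) auto
      finally show ?thesis .
    qed
    show "\<exists>s>0. \<forall>x. x \<noteq> 0 \<and> norm (x - 0) < s \<longrightarrow>
        norm (norm (d 0 x - (\<Sum>j\<le>Suc N. (x ^ j / fact j) *\<^sub>R d j 0)) / \<bar>x\<bar> ^ Suc N - 0) < e"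
    proof (intro exI[of _ "min s1 s2"] conjI allI impI)
      show "min s1 s2 > 0" using s1 s2 by simp
      fix x :: real assume x: "x \<noteq> 0 \<and> norm (x - 0) < min s1 s2"
      have inS: "y \<in> S" if "\<bar>y\<bar> \<le> \<bar>x\<bar>" for y
        using s2 x that by (auto simp: subset_iff)
      have rbx: "norm (r y) \<le> e/2 * \<bar>x\<bar>^N" if "\<bar>y\<bar> \<le> \<bar>x\<bar>" for y
        using rb[OF that] x by auto
      have "norm (g x - g 0) \<le> e/2 * \<bar>x\<bar>^N * \<bar>x\<bar>"
      proof (cases "0 \<le> x")
        case True
        have "norm (g x - g 0) \<le> e/2 * \<bar>x\<bar>^N * (x - 0)"
        proof (rule vec_bound[OF True, of g r])
          fix y assume "y \<in> {0..x}" then show "(g has_vector_derivative r y) (at y)"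
            by (intro gder inS) auto
        next
          fix y assume "y \<in> {0..x}" then show "norm (r y) \<le> e/2 * \<bar>x\<bar>^N"
            by (intro rbx) auto
        qed
        then show ?thesis using True by simp
      next
        case False
        then have F: "x \<le> 0" by simp
        have "norm (g 0 - g x) \<le> e/2 * \<bar>x\<bar>^N * (0 - x)"
        proof (rule vec_bound[OF F, of g r])
          fix y assume "y \<in> {x..0}" then show "(g has_vector_derivative r y) (at y)"
            by (intro gder inS) auto
        next
          fix y assume "y \<in> {x..0}" then show "norm (r y) \<le> e/2 * \<bar>x\<bar>^N"
            by (intro rbx) auto
        qed
        then show ?thesis using False by (simp add: norm_minus_commute)
      qed
      then have "norm (g x) \<le> e/2 * \<bar>x\<bar>^Suc N" using g0 by (simp add: algebra_simps)
      then have "norm (g x) / \<bar>x\<bar>^Suc N \<le> e/2" using x by (simp add: divide_le_eq)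
      then show "norm (norm (d 0 x - (\<Sum>j\<le>Suc N. (x ^ j / fact j) *\<^sub>R d j 0)) / \<bar>x\<bar> ^ Suc N - 0) < e"
      proof -
        have "norm (g x) / \<bar>x\<bar>^Suc N < e" using e \<open>norm (g x) / \<bar>x\<bar>^Suc N \<le> e/2\<close> by linarith
        then show ?thesis unfolding g_def by simp
      qed
    qed
  qed
qed

lemma poly_o_zero:
  fixes a :: "nat \<Rightarrow> complex"
  assumes "((\<lambda>x. norm (\<Sum>j\<le>N. a j * of_real x ^ j) / x^N) \<longlongrightarrow> 0) (at_right 0)"
  shows "\<forall>j\<le>N. a j = 0"
  using assms
proof (induction N arbitrary: a)
  case 0
  then have "((\<lambda>x. norm (a 0)) \<longlongrightarrow> 0) (at_right (0::real))" by simp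
  then have "norm (a 0) = 0"
    using tendsto_const tendsto_unique trivial_limit_at_right_real by blast
  then show ?case by simp
next
  case (Suc N)
  define p where "p x = (\<Sum>j\<le>Suc N. a j * of_real x ^ j)" for x :: real
  have ev: "eventually (\<lambda>x. norm (p x) / x^Suc N * x^Suc N = norm (p x)) (at_right (0::real))"
  proof (rule eventually_at_rightI[of 0 1])
    fix x :: real assume "x \<in> {0<..<1}" then show "norm (p x) / x^Suc N * x^Suc N = norm (p x)" by simp
  qed simp
  have "((\<lambda>x. norm (p x) / x^Suc N * x^Suc N) \<longlongrightarrow> 0 * 0^Suc N) (at_right (0::real))"
    using Suc.prems unfolding p_def by (intro tendsto_intros) auto
  then have "((\<lambda>x. norm (p x)) \<longlongrightarrow> 0) (at_right (0::real))"
    using tendsto_cong[OF ev] by simp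
  then have l1: "(p \<longlongrightarrow> 0) (at_right (0::real))"
    using tendsto_norm_zero_iff by blast
  have "(p \<longlongrightarrow> p 0) (at_right (0::real))"
    unfolding p_def by (intro tendsto_intros)
  then have "p 0 = 0"
    using l1 tendsto_unique trivial_limit_at_right_real by blast
  then have a0: "a 0 = 0"
    unfolding p_def by (simp add: sum.atMost_shift zero_power)
  have peq: "norm (p x) / x^Suc N = norm (\<Sum>j\<le>N. a (Suc j) * of_real x ^ j) / x^N" if "x > 0" for x
  proof -
    have "p x = of_real x * (\<Sum>j\<le>N. a (Suc j) * of_real x ^ j)"
      unfolding p_def sum.atMost_Suc_shift using a0 by (simp add: sum_distrib_left algebra_simps)
    then show ?thesis using that by (simp add: norm_mult)
  qed
  have "eventually (\<lambda>x. norm (p x) / x^Suc N = norm (\<Sum>j\<le>N. a (Suc j) * of_real x ^ j) / x^N) (at_right (0::real))"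
  proof (rule eventually_at_rightI[of 0 1])
    fix x :: real assume "x \<in> {0<..<1}" then show "norm (p x) / x^Suc N = norm (\<Sum>j\<le>N. a (Suc j) * of_real x ^ j) / x^N"
      by (intro peq) simp
  qed simp
  then have "((\<lambda>x. norm (\<Sum>j\<le>N. a (Suc j) * of_real x ^ j) / x^N) \<longlongrightarrow> 0) (at_right 0)"
    using Suc.prems tendsto_cong unfolding p_def by fastforce
  from Suc.IH[OF this] a0 show ?case
    by (metis Suc_le_mono not0_implies_Suc)
qed

lemma at0_right: "(f \<longlongrightarrow> l) (at (0::real)) \<Longrightarrow> (f \<longlongrightarrow> l) (at_right 0)"
  by (rule tendsto_mono[OF at_le]) auto

lemma at0_neg:
  fixes f :: "real \<Rightarrow> real"
  shows "(f \<longlongrightarrow> 0) (at 0) \<Longrightarrow> ((\<lambda>x. f (- x)) \<longlongrightarrow> 0) (at 0)"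
  unfolding LIM_eq by (metis add.inverse_neutral diff_0_right minus_equation_iff norm_minus_cancel)

lemma chain_zero:
  assumes ch: "chain S d" and T: "open T" "T \<subseteq> S" and z: "\<And>x. x \<in> T \<Longrightarrow> d 0 x = 0"
    and x0: "x0 \<in> S" "x0 \<in> closure T"
  shows "d k x0 = 0"
proof -
  have zk: "\<forall>x\<in>T. d k x = 0" for k
  proof (induction k)
    case 0 then show ?case using z by auto
  next
    case (Suc k)
    show ?case
    proof
      fix x assume x: "x \<in> T"
      have "(d k has_vector_derivative d (Suc k) x) (at x)" using ch T x unfolding chain_def by auto
      then have "((\<lambda>y. 0) has_vector_derivative d (Suc k) x) (at x)"
        using has_vector_derivative_transform_within_open[OF _ T(1) x, of "d k" _ "\<lambda>y. 0"] Suc.IH by auto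
      then show "d (Suc k) x = 0"
        using vector_derivative_unique_at has_vector_derivative_const by metis
    qed
  qed
  obtain xs where xs: "\<forall>n. xs n \<in> T" "xs \<longlonglongrightarrow> x0"
    using x0(2) closure_sequential by blast
  have "isCont (d k) x0" using chain_cont[OF ch x0(1)] .
  then have "(\<lambda>n. d k (xs n)) \<longlonglongrightarrow> d k x0"
    using xs(2) isCont_tendsto_compose by blast
  moreover have "(\<lambda>n. d k (xs n)) = (\<lambda>n. 0)" using zk xs(1) by auto
  ultimately show ?thesis using LIMSEQ_unique tendsto_const by metis
qed

lemma scaleR_poly: "(x^j / fact j) *\<^sub>R (v::complex) = (v / of_real (fact j)) * of_real x ^ j"
  by (simp add: scaleR_conv_of_real)

lemma taylor_c:
  fixes d :: "nat \<Rightarrow> real \<Rightarrow> complex"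
  assumes "chain S d" "open S" "0 \<in> S"
  shows "((\<lambda>x. norm (d 0 x - (\<Sum>j\<le>N. (d j 0 / of_real (fact j)) * of_real x ^ j)) / \<bar>x\<bar>^N) \<longlongrightarrow> 0) (at 0)"
  using taylor_at0[OF assms, of N] by (simp add: scaleR_poly)

lemma K_chain:
  fixes w :: "nat \<Rightarrow> real \<Rightarrow> complex"
  assumes "chain UNIV w"
  shows "\<exists>dK. dK 0 = (\<lambda>\<mu>. w 0 (arcsin \<mu>)) \<and> chain {-1<..<1} dK"
proof (rule C1_chain)
  show "\<forall>n. C1 {- 1<..<1} n (\<lambda>\<mu>. w 0 (arcsin \<mu>))"
    using C1_compose[OF chain_C1[OF assms] C1_arcsin] by auto
qed simp

lemma squeeze2:
  fixes f g h :: "real \<Rightarrow> real"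
  assumes "eventually (\<lambda>x. 0 \<le> f x) F" "eventually (\<lambda>x. f x \<le> g x + h x) F"
    "(g \<longlongrightarrow> 0) F" "(h \<longlongrightarrow> 0) F"
  shows "(f \<longlongrightarrow> 0) F"
proof (rule tendsto_sandwich[of "\<lambda>x. 0" f F "\<lambda>x. g x + h x"])
  show "((\<lambda>x. g x + h x) \<longlongrightarrow> 0) F" using tendsto_add[OF assms(3,4)] by simp
qed (use assms in auto)

lemma even_odd_sum:
  fixes b :: "nat \<Rightarrow> complex"
  shows "(\<Sum>j\<le>N. (if even j then b j else 0) * of_real x ^ j)
    = ((\<Sum>j\<le>N. b j * of_real x ^ j) + (\<Sum>j\<le>N. b j * of_real (- x) ^ j)) / 2"
proof -
  have "(\<Sum>j\<le>N. b j * of_real x ^ j) + (\<Sum>j\<le>N. b j * of_real (- x) ^ j)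
      = (\<Sum>j\<le>N. 2 * ((if even j then b j else 0) * of_real x ^ j))"
    unfolding sum.distrib[symmetric]
    by (rule sum.cong) (auto simp: power_minus' algebra_simps)
  then show ?thesis by (simp add: sum_distrib_left[symmetric])
qed

lemma odd_diff_sum:
  fixes b :: "nat \<Rightarrow> complex"
  shows "(\<Sum>j\<le>N. b j * of_real x ^ j) - (\<Sum>j\<le>N. b j * of_real (- x) ^ j)
    = (\<Sum>j\<le>N. (if odd j then 2 * b j else 0) * of_real x ^ j)"
  unfolding sum_subtractf[symmetric]
  by (rule sum.cong) (auto simp: power_minus' algebra_simps)

lemma even_expansion:
  fixes w :: "nat \<Rightarrow> real \<Rightarrow> complex"
  assumes ch: "chain UNIV w" and ev: "\<And>t. \<bar>t\<bar> < pi/2 \<Longrightarrow> w 0 (- t) = w 0 t"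
  shows "\<exists>c. (\<forall>j\<le>N. odd j \<longrightarrow> c j = 0) \<and>
    ((\<lambda>\<mu>. norm (w 0 (arcsin \<mu>) - (\<Sum>j\<le>N. c j * of_real \<mu> ^ j)) / \<mu> ^ N) \<longlongrightarrow> 0) (at_right 0)"
proof -
  obtain dK where dK0: "dK 0 = (\<lambda>\<mu>. w 0 (arcsin \<mu>))" and chK: "chain {-1<..<1} dK"
    using K_chain[OF ch] by blast
  define b where "b j = dK j 0 / of_real (fact j)" for j
  define P where "P x = (\<Sum>j\<le>N. b j * of_real x ^ j)" for x
  define c where "c j = (if even j then b j else 0)" for j
  define A where "A x = norm (dK 0 x - P x) / \<bar>x\<bar>^N" for x
  have TA: "(A \<longlongrightarrow> 0) (at 0)"
    unfolding A_def P_def b_def by (rule taylor_c[OF chK]) auto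
  have TB: "((\<lambda>x. A (- x)) \<longlongrightarrow> 0) (at 0)" by (rule at0_neg[OF TA])
  have bound: "norm (w 0 (arcsin \<mu>) - (\<Sum>j\<le>N. c j * of_real \<mu> ^ j)) / \<mu> ^ N \<le> A \<mu> + A (- \<mu>)"
    if "\<mu> \<in> {0<..<1}" for \<mu>
  proof -
    have m: "-1 \<le> \<mu>" "\<mu> \<le> 1" using that by auto
    have "\<bar>arcsin \<mu>\<bar> < pi/2" using arcsin_lt_bounded[of \<mu>] that by auto
    then have Kev: "dK 0 (- \<mu>) = dK 0 \<mu>" unfolding dK0 using ev arcsin_minus[OF m] by simp
    have eq: "w 0 (arcsin \<mu>) - (\<Sum>j\<le>N. c j * of_real \<mu> ^ j) = ((dK 0 \<mu> - P \<mu>) + (dK 0 (- \<mu>) - P (- \<mu>))) / 2"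
      unfolding c_def even_odd_sum P_def using Kev by (simp add: dK0 field_simps)
    have "norm (w 0 (arcsin \<mu>) - (\<Sum>j\<le>N. c j * of_real \<mu> ^ j)) = norm ((dK 0 \<mu> - P \<mu>) + (dK 0 (- \<mu>) - P (- \<mu>))) / 2"
      by (subst eq) (simp add: norm_divide)
    then have "norm (w 0 (arcsin \<mu>) - (\<Sum>j\<le>N. c j * of_real \<mu> ^ j)) \<le> (norm (dK 0 \<mu> - P \<mu>) + norm (dK 0 (- \<mu>) - P (- \<mu>))) / 2"
      using norm_triangle_ineq[of "dK 0 \<mu> - P \<mu>" "dK 0 (- \<mu>) - P (- \<mu>)"] by (smt (verit) | simp add: field_simps | auto simp: field_simps)
    then have "norm (w 0 (arcsin \<mu>) - (\<Sum>j\<le>N. c j * of_real \<mu> ^ j)) / \<mu> ^ N \<le> ((norm (dK 0 \<mu> - P \<mu>) + norm (dK 0 (- \<mu>) - P (- \<mu>))) / 2) / \<mu> ^ N"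
      by (rule divide_right_mono) (use that in auto)
    also have "\<dots> = (A \<mu> + A (- \<mu>)) / 2"
      unfolding A_def using that by (simp add: field_simps)
    finally have "norm (w 0 (arcsin \<mu>) - (\<Sum>j\<le>N. c j * of_real \<mu> ^ j)) / \<mu> ^ N \<le> (A \<mu> + A (- \<mu>)) / 2" .
    moreover have "A \<mu> \<ge> 0" "A (- \<mu>) \<ge> 0" unfolding A_def by auto
    then have "(A \<mu> + A (- \<mu>)) / 2 \<le> A \<mu> + A (- \<mu>)" by simp
    ultimately show ?thesis by (rule order_trans)
  qed
  show ?thesis
  proof (intro exI[of _ c] conjI)
    show "\<forall>j\<le>N. odd j \<longrightarrow> c j = 0" unfolding c_def by auto
    show "((\<lambda>\<mu>. norm (w 0 (arcsin \<mu>) - (\<Sum>j\<le>N. c j * of_real \<mu> ^ j)) / \<mu> ^ N) \<longlongrightarrow> 0) (at_right 0)"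
    proof (rule squeeze2[OF _ _ at0_right[OF TA] at0_right[OF TB]])
      show "\<forall>\<^sub>F x in at_right 0. 0 \<le> norm (w 0 (arcsin x) - (\<Sum>j\<le>N. c j * complex_of_real x ^ j)) / x ^ N"
        by (rule eventually_at_rightI[of 0 1]) auto
      show "\<forall>\<^sub>F x in at_right 0. norm (w 0 (arcsin x) - (\<Sum>j\<le>N. c j * complex_of_real x ^ j)) / x ^ N \<le> A x + A (- x)"
        by (rule eventually_at_rightI[of 0 1]) (use bound in auto)
    qed
  qed
qed

lemma sin_at0: "filterlim sin (at 0) (at (0::real))"
proof (rule filterlim_atI)
  show "(sin \<longlongrightarrow> 0) (at (0::real))"
    using tendsto_sin[OF tendsto_ident_at[of 0 UNIV]] by simp
  show "\<forall>\<^sub>F x in at 0. sin x \<noteq> (0::real)"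
    unfolding eventually_at
  proof (intro exI[of _ pi] conjI allI ballI impI)
    fix x :: real assume "x \<noteq> 0 \<and> dist x 0 < pi"
    then show "sin x \<noteq> 0" using sin_eq_0_pi[of x] by (auto simp: dist_real_def abs_less_iff)
  qed simp
qed

lemma odd_derivs_zero:
  fixes w :: "nat \<Rightarrow> real \<Rightarrow> complex"
  assumes ch: "chain UNIV w"
    and tay: "\<And>N. \<exists>c. (\<forall>j\<le>N. odd j \<longrightarrow> c j = 0) \<and>
      ((\<lambda>\<mu>. norm (w 0 (arcsin \<mu>) - (\<Sum>j\<le>N. c j * of_real \<mu> ^ j)) / \<mu> ^ N) \<longlongrightarrow> 0) (at_right 0)"
    and k: "odd k"
  shows "w k 0 = 0"
proof -
  obtain dK where dK0: "dK 0 = (\<lambda>\<mu>. w 0 (arcsin \<mu>))" and chK: "chain {-1<..<1} dK"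
    using K_chain[OF ch] by blast
  define b where "b j = dK j 0 / of_real (fact j)" for j
  define P where "P N x = (\<Sum>j\<le>N. b j * of_real x ^ j)" for N x
  define A where "A N x = norm (dK 0 x - P N x) / \<bar>x\<bar>^N" for N x
  have TA: "(A N \<longlongrightarrow> 0) (at 0)" for N
    unfolding A_def P_def b_def by (rule taylor_c[OF chK]) auto
  have bodd: "b j = 0" if "odd j" for j
  proof -
    obtain c where c: "\<forall>i\<le>j. odd i \<longrightarrow> c i = 0"
      "((\<lambda>\<mu>. norm (w 0 (arcsin \<mu>) - (\<Sum>i\<le>j. c i * of_real \<mu> ^ i)) / \<mu> ^ j) \<longlongrightarrow> 0) (at_right 0)"
      using tay by blast
    have "((\<lambda>\<mu>. norm (\<Sum>i\<le>j. (b i - c i) * of_real \<mu> ^ i) / \<mu> ^ j) \<longlongrightarrow> 0) (at_right 0)"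
    proof (rule squeeze2[OF _ _ at0_right[OF TA[of j]] c(2)])
      show "\<forall>\<^sub>F x in at_right 0. 0 \<le> norm (\<Sum>i\<le>j. (b i - c i) * complex_of_real x ^ i) / x ^ j"
        by (rule eventually_at_rightI[of 0 1]) auto
      show "\<forall>\<^sub>F x in at_right 0. norm (\<Sum>i\<le>j. (b i - c i) * complex_of_real x ^ i) / x ^ j
          \<le> A j x + norm (w 0 (arcsin x) - (\<Sum>i\<le>j. c i * complex_of_real x ^ i)) / x ^ j"
      proof (rule eventually_at_rightI[of 0 1])
        fix x :: real assume x: "x \<in> {0<..<1}"
        have "(\<Sum>i\<le>j. (b i - c i) * complex_of_real x ^ i)
            = (w 0 (arcsin x) - (\<Sum>i\<le>j. c i * complex_of_real x ^ i)) - (dK 0 x - P j x)"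
          unfolding P_def dK0 by (simp add: sum_subtractf algebra_simps)
        then have "norm (\<Sum>i\<le>j. (b i - c i) * complex_of_real x ^ i)
            \<le> norm (dK 0 x - P j x) + norm (w 0 (arcsin x) - (\<Sum>i\<le>j. c i * complex_of_real x ^ i))"
          by (metis add.commute norm_triangle_ineq4)
        then show "norm (\<Sum>i\<le>j. (b i - c i) * complex_of_real x ^ i) / x ^ j
            \<le> A j x + norm (w 0 (arcsin x) - (\<Sum>i\<le>j. c i * complex_of_real x ^ i)) / x ^ j"
          unfolding A_def using x by (simp add: add_divide_distrib[symmetric] divide_right_mono)
      qed simp
    qed
    from poly_o_zero[OF this] c(1) that show ?thesis by auto
  qed
  define \<phi> where "\<phi> x = dK 0 x - dK 0 (- x)" for x
  have phi: "((\<lambda>x. norm (\<phi> x) / \<bar>x\<bar>^N) \<longlongrightarrow> 0) (at 0)" for N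
  proof (rule squeeze2[OF _ _ TA[of N] at0_neg[OF TA[of N]]])
    show "\<forall>\<^sub>F x in at 0. 0 \<le> norm (\<phi> x) / \<bar>x\<bar> ^ N" by simp
    show "\<forall>\<^sub>F x in at 0. norm (\<phi> x) / \<bar>x\<bar> ^ N \<le> A N x + A N (- x)"
    proof (rule always_eventually, rule allI)
      fix x :: real
      have "P N x - P N (- x) = 0"
        unfolding P_def odd_diff_sum using bodd by (intro sum.neutral) auto
      then have "\<phi> x = (dK 0 x - P N x) - (dK 0 (- x) - P N (- x))"
        unfolding \<phi>_def by (simp add: algebra_simps)
      then have "norm (\<phi> x) \<le> norm (dK 0 x - P N x) + norm (dK 0 (- x) - P N (- x))"
        by (metis norm_triangle_ineq4)
      then show "norm (\<phi> x) / \<bar>x\<bar> ^ N \<le> A N x + A N (- x)"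
        unfolding A_def by (simp add: add_divide_distrib[symmetric] divide_right_mono)
    qed
  qed
  define e where "e t = w 0 t - w 0 (- t)" for t
  have e_phi: "e t = \<phi> (sin t)" if "\<bar>t\<bar> < pi/2" for t
  proof -
    have "arcsin (sin t) = t" using that by (intro arcsin_sin) auto
    moreover have "arcsin (sin (- t)) = - t" using that by (intro arcsin_sin) auto
    then have "arcsin (- sin t) = - t" by simp
    ultimately show ?thesis unfolding e_def \<phi>_def dK0 by simp
  qed
  have elim: "((\<lambda>t. norm (e t) / \<bar>t\<bar>^N) \<longlongrightarrow> 0) (at 0)" for N
  proof -
    have c1: "((\<lambda>t. norm (\<phi> (sin t)) / \<bar>sin t\<bar>^N) \<longlongrightarrow> 0) (at 0)"
      using filterlim_compose[OF phi sin_at0] by simp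
    show ?thesis
    proof (rule squeeze2[OF _ _ c1 tendsto_const[of 0]])
      show "\<forall>\<^sub>F x in at 0. 0 \<le> norm (e x) / \<bar>x\<bar> ^ N" by simp
      have bnd: "norm (e x) / \<bar>x\<bar> ^ N \<le> norm (\<phi> (sin x)) / \<bar>sin x\<bar> ^ N"
        if x: "x \<noteq> 0" and xa: "\<bar>x\<bar> < pi/2" for x
      proof -
        have "- pi < x" "x < pi" using xa by (auto simp: abs_less_iff)
        then have "sin x \<noteq> 0" using sin_eq_0_pi[of x] x by auto
        then have "0 < \<bar>sin x\<bar>^N" by simp
        moreover have "\<bar>sin x\<bar>^N \<le> \<bar>x\<bar>^N" by (intro power_mono abs_sin_x_le_abs_x) simp
        ultimately have "norm (\<phi> (sin x)) / \<bar>x\<bar>^N \<le> norm (\<phi> (sin x)) / \<bar>sin x\<bar>^N"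
          by (intro divide_left_mono) auto
        then show ?thesis using e_phi[OF xa] by simp
      qed
      show "\<forall>\<^sub>F x in at 0. norm (e x) / \<bar>x\<bar> ^ N \<le> norm (\<phi> (sin x)) / \<bar>sin x\<bar> ^ N + 0"
        unfolding eventually_at by (intro exI[of _ "pi/2"]) (auto simp: dist_real_def intro!: bnd)
    qed
  qed
  define a where "a j = w j 0 / of_real (fact j)" for j
  define Q where "Q x = (\<Sum>j\<le>k. a j * of_real x ^ j)" for x
  define B where "B x = norm (w 0 x - Q x) / \<bar>x\<bar>^k" for x
  have TB: "(B \<longlongrightarrow> 0) (at 0)"
    unfolding B_def Q_def a_def by (rule taylor_c[OF ch]) auto
  have "((\<lambda>x. norm (\<Sum>j\<le>k. (if odd j then 2 * a j else 0) * of_real x ^ j) / x^k) \<longlongrightarrow> 0) (at_right 0)"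
  proof -
  have TBe: "((\<lambda>x. B (- x) + norm (e x) / \<bar>x\<bar>^k) \<longlongrightarrow> 0) (at 0)"
    using tendsto_add[OF at0_neg[OF TB] elim[of k]] by simp
  show ?thesis
  proof (rule squeeze2[OF _ _ at0_right[OF TB] at0_right[OF TBe]])
    show "\<forall>\<^sub>F x in at_right 0. 0 \<le> norm (\<Sum>j\<le>k. (if odd j then 2 * a j else 0) * complex_of_real x ^ j) / x ^ k"
      by (rule eventually_at_rightI[of 0 1]) auto
    show "\<forall>\<^sub>F x in at_right 0. norm (\<Sum>j\<le>k. (if odd j then 2 * a j else 0) * complex_of_real x ^ j) / x ^ k
        \<le> B x + (B (- x) + norm (e x) / \<bar>x\<bar> ^ k)"
    proof (rule eventually_at_rightI[of 0 1])
      fix x :: real assume x: "x \<in> {0<..<1}"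
      have "(\<Sum>j\<le>k. (if odd j then 2 * a j else 0) * complex_of_real x ^ j) = Q x - Q (- x)"
        unfolding Q_def odd_diff_sum ..
      also have "\<dots> = (Q x - w 0 x) - (Q (- x) - w 0 (- x)) + e x"
        unfolding e_def by simp
      finally have eq: "(\<Sum>j\<le>k. (if odd j then 2 * a j else 0) * complex_of_real x ^ j)
          = (Q x - w 0 x) - (Q (- x) - w 0 (- x)) + e x" .
      have "norm ((Q x - w 0 x) - (Q (- x) - w 0 (- x)) + e x) \<le> norm ((Q x - w 0 x) - (Q (- x) - w 0 (- x))) + norm (e x)"
        by (rule norm_triangle_ineq)
      moreover have "norm ((Q x - w 0 x) - (Q (- x) - w 0 (- x))) \<le> norm (Q x - w 0 x) + norm (Q (- x) - w 0 (- x))"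
        by (rule norm_triangle_ineq4)
      moreover have "norm (Q x - w 0 x) = norm (w 0 x - Q x)" "norm (Q (- x) - w 0 (- x)) = norm (w 0 (- x) - Q (- x))"
        by (simp_all add: norm_minus_commute)
      ultimately have "norm (\<Sum>j\<le>k. (if odd j then 2 * a j else 0) * complex_of_real x ^ j)
          \<le> norm (w 0 x - Q x) + (norm (w 0 (- x) - Q (- x)) + norm (e x))"
        unfolding eq by linarith
      then show "norm (\<Sum>j\<le>k. (if odd j then 2 * a j else 0) * complex_of_real x ^ j) / x ^ k
          \<le> B x + (B (- x) + norm (e x) / \<bar>x\<bar> ^ k)"
        unfolding B_def using x by (simp add: add_divide_distrib[symmetric] divide_right_mono)
    qed simp
  qed
  qed
  then have "\<forall>j\<le>k. (if odd j then 2 * a j else 0) = 0" by (rule poly_o_zero)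
  then have "a k = 0" using k by auto
  then show ?thesis unfolding a_def by simp
qed




section \<open>Two-dimensional smoothness\<close>

declare Ck2.simps[simp del]

lemma Ck2_0: "Ck2 0 f = continuous_on UNIV f"
  by (simp add: Ck2.simps)

lemma Ck2_SucI:
  "(\<And>x. (f has_derivative (\<lambda>v. fst v *\<^sub>R D1 x + snd v *\<^sub>R D2 x)) (at x)) \<Longrightarrow> Ck2 n D1 \<Longrightarrow> Ck2 n D2
   \<Longrightarrow> Ck2 (Suc n) f"
  unfolding Ck2.simps(2) by blast

lemma Ck2_SucE:
  assumes "Ck2 (Suc n) f"
  obtains D1 D2 where "\<And>x. (f has_derivative (\<lambda>v. fst v *\<^sub>R D1 x + snd v *\<^sub>R D2 x)) (at x)" "Ck2 n D1" "Ck2 n D2"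
  using assms unfolding Ck2.simps(2) by blast

lemma Ck2_Suc_imp: "Ck2 (Suc n) f \<Longrightarrow> Ck2 n f"
proof (induction n arbitrary: f)
  case 0
  then obtain D1 D2 where "\<And>x. (f has_derivative (\<lambda>v. fst v *\<^sub>R D1 x + snd v *\<^sub>R D2 x)) (at x)"
    by (rule Ck2_SucE) blast
  then have "\<forall>x. isCont f x" using has_derivative_continuous by blast
  then show ?case by (simp add: continuous_at_imp_continuous_on Ck2_0)
next
  case (Suc n)
  obtain D1 D2 where d: "\<And>x. (f has_derivative (\<lambda>v. fst v *\<^sub>R D1 x + snd v *\<^sub>R D2 x)) (at x)"
    "Ck2 (Suc n) D1" "Ck2 (Suc n) D2" using Suc.prems by (rule Ck2_SucE) blast
  show ?case by (rule Ck2_SucI[OF d(1) Suc.IH[OF d(2)] Suc.IH[OF d(3)]])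
qed

lemma smooth2_Suc: "smooth2 f \<Longrightarrow> Ck2 (Suc n) f"
  unfolding smooth2_def by blast

definition pd1 :: "(real \<times> real \<Rightarrow> complex) \<Rightarrow> real \<times> real \<Rightarrow> complex" where
  "pd1 F x = frechet_derivative F (at x) (1, 0)"

definition pd2 :: "(real \<times> real \<Rightarrow> complex) \<Rightarrow> real \<times> real \<Rightarrow> complex" where
  "pd2 F x = frechet_derivative F (at x) (0, 1)"

lemma deriv_pd:
  assumes "(F has_derivative (\<lambda>v. fst v *\<^sub>R d1 + snd v *\<^sub>R d2)) (at x)"
  shows "pd1 F x = d1" "pd2 F x = d2"
proof -
  have e: "frechet_derivative F (at x) = (\<lambda>v. fst v *\<^sub>R d1 + snd v *\<^sub>R d2)"
    using frechet_derivative_at[OF assms] by simp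
  show "pd1 F x = d1" unfolding pd1_def e by simp
  show "pd2 F x = d2" unfolding pd2_def e by simp
qed

lemma Ck2_Suc_pd:
  assumes "Ck2 (Suc n) F"
  shows "(\<forall>x. (F has_derivative (\<lambda>v. fst v *\<^sub>R pd1 F x + snd v *\<^sub>R pd2 F x)) (at x))
      \<and> Ck2 n (pd1 F) \<and> Ck2 n (pd2 F)"
proof -
  obtain D1 D2 where d: "\<And>x. (F has_derivative (\<lambda>v. fst v *\<^sub>R D1 x + snd v *\<^sub>R D2 x)) (at x)"
    "Ck2 n D1" "Ck2 n D2" using assms by (rule Ck2_SucE) blast
  have "pd1 F = D1" by (rule ext, rule deriv_pd(1)[OF d(1)])
  moreover have "pd2 F = D2" by (rule ext, rule deriv_pd(2)[OF d(1)])
  ultimately show ?thesis using d by simp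
qed

lemma smooth2_deriv: "smooth2 F \<Longrightarrow> (F has_derivative (\<lambda>v. fst v *\<^sub>R pd1 F x + snd v *\<^sub>R pd2 F x)) (at x)"
  using Ck2_Suc_pd[OF smooth2_Suc[of F 0]] by blast

lemma smooth2_pd1: "smooth2 F \<Longrightarrow> smooth2 (pd1 F)"
  unfolding smooth2_def using Ck2_Suc_pd by blast

lemma smooth2_pd2: "smooth2 F \<Longrightarrow> smooth2 (pd2 F)"
  unfolding smooth2_def using Ck2_Suc_pd by blast

lemma Ck2_add: "Ck2 n F \<Longrightarrow> Ck2 n G \<Longrightarrow> Ck2 n (\<lambda>x. F x + G x)"
proof (induction n arbitrary: F G)
  case 0 then show ?case by (auto intro: continuous_on_add simp: Ck2_0)
next
  case (Suc n)
  obtain F1 F2 where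
    F: "\<And>x. (F has_derivative (\<lambda>v. fst v *\<^sub>R F1 x + snd v *\<^sub>R F2 x)) (at x)" "Ck2 n F1" "Ck2 n F2"
    using Suc.prems(1) by (rule Ck2_SucE) blast
  obtain G1 G2 where
    G: "\<And>x. (G has_derivative (\<lambda>v. fst v *\<^sub>R G1 x + snd v *\<^sub>R G2 x)) (at x)" "Ck2 n G1" "Ck2 n G2"
    using Suc.prems(2) by (rule Ck2_SucE) blast
  have "\<forall>x. ((\<lambda>x. F x + G x) has_derivative (\<lambda>v. fst v *\<^sub>R (F1 x + G1 x) + snd v *\<^sub>R (F2 x + G2 x))) (at x)"
  proof
    fix x
    show "((\<lambda>x. F x + G x) has_derivative (\<lambda>v. fst v *\<^sub>R (F1 x + G1 x) + snd v *\<^sub>R (F2 x + G2 x))) (at x)"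
      using has_derivative_add[OF F(1)[of x] G(1)[of x]]
      by (simp add: scaleR_add_right algebra_simps)
  qed
  then have D: "\<And>x. ((\<lambda>x. F x + G x) has_derivative (\<lambda>v. fst v *\<^sub>R (F1 x + G1 x) + snd v *\<^sub>R (F2 x + G2 x))) (at x)" by blast
  show ?case by (rule Ck2_SucI[OF D]) (use Suc.IH F G in auto)
qed

lemma Ck2_scale: "Ck2 n F \<Longrightarrow> Ck2 n (\<lambda>x. r *\<^sub>R F x)"
proof (induction n arbitrary: F)
  case 0 then show ?case by (auto intro: continuous_on_scaleR continuous_on_const simp: Ck2_0)
next
  case (Suc n)
  obtain F1 F2 where
    F: "\<And>x. (F has_derivative (\<lambda>v. fst v *\<^sub>R F1 x + snd v *\<^sub>R F2 x)) (at x)" "Ck2 n F1" "Ck2 n F2"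
    using Suc.prems(1) by (rule Ck2_SucE) blast
  have "\<forall>x. ((\<lambda>x. r *\<^sub>R F x) has_derivative (\<lambda>v. fst v *\<^sub>R (r *\<^sub>R F1 x) + snd v *\<^sub>R (r *\<^sub>R F2 x))) (at x)"
  proof
    fix x
    show "((\<lambda>x. r *\<^sub>R F x) has_derivative (\<lambda>v. fst v *\<^sub>R (r *\<^sub>R F1 x) + snd v *\<^sub>R (r *\<^sub>R F2 x))) (at x)"
      using has_derivative_scaleR_right[OF F(1)[of x], of r]
      by (simp add: scaleR_add_right mult.commute)
  qed
  then have D: "\<And>x. ((\<lambda>x. r *\<^sub>R F x) has_derivative (\<lambda>v. fst v *\<^sub>R (r *\<^sub>R F1 x) + snd v *\<^sub>R (r *\<^sub>R F2 x))) (at x)" by blast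
  show ?case by (rule Ck2_SucI[OF D]) (use Suc.IH F in auto)
qed

lemma Ck2_diff: "Ck2 n F \<Longrightarrow> Ck2 n G \<Longrightarrow> Ck2 n (\<lambda>x. F x - G x)"
  using Ck2_add[of n F "\<lambda>x. (-1) *\<^sub>R G x"] Ck2_scale[of n G "-1"] by simp

lemma smooth2_add: "smooth2 F \<Longrightarrow> smooth2 G \<Longrightarrow> smooth2 (\<lambda>x. F x + G x)"
  unfolding smooth2_def using Ck2_add by blast
lemma smooth2_diff: "smooth2 F \<Longrightarrow> smooth2 G \<Longrightarrow> smooth2 (\<lambda>x. F x - G x)"
  unfolding smooth2_def using Ck2_diff by blast
lemma smooth2_scale: "smooth2 F \<Longrightarrow> smooth2 (\<lambda>x. r *\<^sub>R F x)"
  unfolding smooth2_def using Ck2_scale by blast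

lemma pd_add:
  assumes "smooth2 F" "smooth2 G"
  shows "pd1 (\<lambda>x. F x + G x) = (\<lambda>x. pd1 F x + pd1 G x)" "pd2 (\<lambda>x. F x + G x) = (\<lambda>x. pd2 F x + pd2 G x)"
proof -
  have D: "((\<lambda>x. F x + G x) has_derivative (\<lambda>v. fst v *\<^sub>R (pd1 F x + pd1 G x) + snd v *\<^sub>R (pd2 F x + pd2 G x))) (at x)" for x
    using has_derivative_add[OF smooth2_deriv[OF assms(1)] smooth2_deriv[OF assms(2)], of x]
    by (simp add: scaleR_add_right algebra_simps)
  show "pd1 (\<lambda>x. F x + G x) = (\<lambda>x. pd1 F x + pd1 G x)" by (rule ext, rule deriv_pd(1)[OF D])
  show "pd2 (\<lambda>x. F x + G x) = (\<lambda>x. pd2 F x + pd2 G x)" by (rule ext, rule deriv_pd(2)[OF D])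
qed

lemma pd_diff:
  assumes "smooth2 F" "smooth2 G"
  shows "pd1 (\<lambda>x. F x - G x) = (\<lambda>x. pd1 F x - pd1 G x)" "pd2 (\<lambda>x. F x - G x) = (\<lambda>x. pd2 F x - pd2 G x)"
proof -
  have D: "((\<lambda>x. F x - G x) has_derivative (\<lambda>v. fst v *\<^sub>R (pd1 F x - pd1 G x) + snd v *\<^sub>R (pd2 F x - pd2 G x))) (at x)" for x
    using has_derivative_diff[OF smooth2_deriv[OF assms(1)] smooth2_deriv[OF assms(2)], of x]
    by (simp add: scaleR_diff_right algebra_simps)
  show "pd1 (\<lambda>x. F x - G x) = (\<lambda>x. pd1 F x - pd1 G x)" by (rule ext, rule deriv_pd(1)[OF D])
  show "pd2 (\<lambda>x. F x - G x) = (\<lambda>x. pd2 F x - pd2 G x)" by (rule ext, rule deriv_pd(2)[OF D])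
qed

definition aff :: "real \<Rightarrow> real \<Rightarrow> real \<Rightarrow> real \<Rightarrow> real \<Rightarrow> real \<Rightarrow> real \<times> real \<Rightarrow> real \<times> real" where
  "aff p a b q c d x = (p + a * fst x + b * snd x, q + c * fst x + d * snd x)"

lemma aff_deriv: "(aff p a b q c d has_derivative (\<lambda>v. (a * fst v + b * snd v, c * fst v + d * snd v))) (at x)"
  unfolding aff_def
  by (auto intro!: derivative_eq_intros has_derivative_Pair)

lemma comp_aff_deriv:
  assumes "(F has_derivative (\<lambda>v. fst v *\<^sub>R d1 + snd v *\<^sub>R d2)) (at (aff p a b q c d x))"
  shows "((\<lambda>x. F (aff p a b q c d x)) has_derivative
    (\<lambda>v. fst v *\<^sub>R (a *\<^sub>R d1 + c *\<^sub>R d2) + snd v *\<^sub>R (b *\<^sub>R d1 + d *\<^sub>R d2))) (at x)"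
proof -
  have "((\<lambda>x. F (aff p a b q c d x)) has_derivative
    (\<lambda>v. (a * fst v + b * snd v) *\<^sub>R d1 + (c * fst v + d * snd v) *\<^sub>R d2)) (at x)"
    using has_derivative_compose[OF aff_deriv assms] by simp
  then show ?thesis by (simp add: algebra_simps scaleR_add_left scaleR_add_right)
qed

lemma Ck2_aff: "Ck2 n F \<Longrightarrow> Ck2 n (\<lambda>x. F (aff p a b q c d x))"
proof (induction n arbitrary: F)
  case 0
  have "continuous_on UNIV (aff p a b q c d)"
    unfolding aff_def by (intro continuous_intros)
  then show ?case using 0 continuous_on_compose2[of UNIV F UNIV "aff p a b q c d"] by (auto simp: Ck2_0)
next
  case (Suc n)
  obtain F1 F2 where
    F: "\<And>x. (F has_derivative (\<lambda>v. fst v *\<^sub>R F1 x + snd v *\<^sub>R F2 x)) (at x)" "Ck2 n F1" "Ck2 n F2"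
    using Suc.prems(1) by (rule Ck2_SucE) blast
  have D: "\<And>x. ((\<lambda>x. F (aff p a b q c d x)) has_derivative
     (\<lambda>v. fst v *\<^sub>R (a *\<^sub>R F1 (aff p a b q c d x) + c *\<^sub>R F2 (aff p a b q c d x))
        + snd v *\<^sub>R (b *\<^sub>R F1 (aff p a b q c d x) + d *\<^sub>R F2 (aff p a b q c d x)))) (at x)"
    using comp_aff_deriv F(1) by blast
  have "Ck2 n (\<lambda>x. a *\<^sub>R F1 (aff p a b q c d x) + c *\<^sub>R F2 (aff p a b q c d x))"
    "Ck2 n (\<lambda>x. b *\<^sub>R F1 (aff p a b q c d x) + d *\<^sub>R F2 (aff p a b q c d x))"
    using Suc.IH F by (auto intro!: Ck2_add Ck2_scale[where F="\<lambda>x. F1 (aff p a b q c d x)"]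
      Ck2_scale[where F="\<lambda>x. F2 (aff p a b q c d x)"])
  then show ?case by (intro Ck2_SucI[OF D])
qed

lemma smooth2_aff: "smooth2 F \<Longrightarrow> smooth2 (\<lambda>x. F (aff p a b q c d x))"
  unfolding smooth2_def using Ck2_aff by blast

lemma pd_aff:
  assumes "smooth2 F"
  shows "pd1 (\<lambda>x. F (aff p a b q c d x)) = (\<lambda>x. a *\<^sub>R pd1 F (aff p a b q c d x) + c *\<^sub>R pd2 F (aff p a b q c d x))"
    "pd2 (\<lambda>x. F (aff p a b q c d x)) = (\<lambda>x. b *\<^sub>R pd1 F (aff p a b q c d x) + d *\<^sub>R pd2 F (aff p a b q c d x))"
  by (rule ext, rule deriv_pd(1)[OF comp_aff_deriv[OF smooth2_deriv[OF assms]]])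
     (rule ext, rule deriv_pd(2)[OF comp_aff_deriv[OF smooth2_deriv[OF assms]]])

lemma slice1:
  assumes "smooth2 F"
  shows "((\<lambda>s. F (a + s, b)) has_vector_derivative pd1 F (a + s, b)) (at s)"
proof -
  have p: "((\<lambda>s. (a + s, b)) has_derivative (\<lambda>t. (t, 0))) (at s)"
    by (auto intro!: derivative_eq_intros has_derivative_Pair)
  show ?thesis
    using has_derivative_compose[OF p smooth2_deriv[OF assms]]
    unfolding has_vector_derivative_def by simp
qed

lemma slice2:
  assumes "smooth2 F"
  shows "((\<lambda>r. F (a, b + r)) has_vector_derivative pd2 F (a, b + r)) (at r)"
proof -
  have p: "((\<lambda>r. (a, b + r)) has_derivative (\<lambda>t. (0, t))) (at r)"
    by (auto intro!: derivative_eq_intros has_derivative_Pair)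
  show ?thesis
    using has_derivative_compose[OF p smooth2_deriv[OF assms]]
    unfolding has_vector_derivative_def by simp
qed

lemma mixed_bound:
  fixes \<phi> P Q :: "real \<Rightarrow> real \<Rightarrow> complex"
  assumes h: "0 \<le> h"
    and dP: "\<And>s r. ((\<lambda>s. \<phi> s r) has_vector_derivative P s r) (at s)"
    and dQ: "\<And>s r. ((\<lambda>r. P s r) has_vector_derivative Q s r) (at r)"
    and bnd: "\<And>s r. s \<in> {0..h} \<Longrightarrow> r \<in> {0..h} \<Longrightarrow> norm (Q s r - c) \<le> e"
  shows "norm (\<phi> h h - \<phi> h 0 - \<phi> 0 h + \<phi> 0 0 - (h * h) *\<^sub>R c) \<le> e * h * h"
proof -
  define g where "g s = \<phi> s h - \<phi> s 0 - (s * h) *\<^sub>R c" for s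
  have kb: "norm (P s h - P s 0 - h *\<^sub>R c) \<le> e * h" if "s \<in> {0..h}" for s
  proof -
    have "norm ((P s h - h *\<^sub>R c) - (P s 0 - 0 *\<^sub>R c)) \<le> e * (h - 0)"
    proof (rule vec_bound[OF h, where f="\<lambda>r. P s r - r *\<^sub>R c" and f'="\<lambda>r. Q s r - c"])
      fix r assume "r \<in> {0..h}"
      show "((\<lambda>r. P s r - r *\<^sub>R c) has_vector_derivative Q s r - c) (at r)"
        using has_vector_derivative_diff[OF dQ[where s=s and r=r] has_vector_derivative_scaleR[OF DERIV_ident has_vector_derivative_const[of c]]]
        by simp
      show "norm (Q s r - c) \<le> e" using bnd that \<open>r \<in> {0..h}\<close> by blast
    qed
    then show ?thesis by (simp add: algebra_simps)
  qed
  have "norm (g h - g 0) \<le> (e * h) * (h - 0)"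
  proof (rule vec_bound[OF h, where f'="\<lambda>s. P s h - P s 0 - h *\<^sub>R c"])
    fix s assume "s \<in> {0..h}"
    show "(g has_vector_derivative P s h - P s 0 - h *\<^sub>R c) (at s)"
      unfolding g_def
      using has_vector_derivative_diff[OF has_vector_derivative_diff[OF dP[where s=s and r=h] dP[where s=s and r=0]]
          has_vector_derivative_scaleR[OF DERIV_cmult_right[OF DERIV_ident, of h] has_vector_derivative_const[of c]]]
      by simp
    show "norm (P s h - P s 0 - h *\<^sub>R c) \<le> e * h" using kb \<open>s \<in> {0..h}\<close> .
  qed
  moreover have "g h - g 0 = \<phi> h h - \<phi> h 0 - \<phi> 0 h + \<phi> 0 0 - (h * h) *\<^sub>R c"
    unfolding g_def by (simp add: algebra_simps)
  ultimately show ?thesis by (simp add: mult.assoc)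
qed

lemma schwarz:
  assumes H: "smooth2 H"
  shows "pd2 (pd1 H) x = pd1 (pd2 H) x"
proof -
  obtain x1 x2 where x: "x = (x1, x2)" by (cases x)
  have s1: "smooth2 (pd1 H)" and s2: "smooth2 (pd2 H)" using smooth2_pd1 smooth2_pd2 H by blast+
  have s12: "smooth2 (pd2 (pd1 H))" and s21: "smooth2 (pd1 (pd2 H))" using smooth2_pd1 smooth2_pd2 s1 s2 by blast+
  have cont: "isCont F x" if "smooth2 F" for F
    using has_derivative_continuous[OF smooth2_deriv[OF that]] .
  have "norm (pd2 (pd1 H) x - pd1 (pd2 H) x) \<le> 0 + e" if e: "e > 0" for e
  proof -
    obtain d1 where d1: "d1 > 0" "\<And>y. dist y x < d1 \<Longrightarrow> dist (pd2 (pd1 H) y) (pd2 (pd1 H) x) < e/2"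
      using cont[OF s12] e unfolding continuous_at_eps_delta by (metis half_gt_zero)
    obtain d2 where d2: "d2 > 0" "\<And>y. dist y x < d2 \<Longrightarrow> dist (pd1 (pd2 H) y) (pd1 (pd2 H) x) < e/2"
      using cont[OF s21] e unfolding continuous_at_eps_delta by (metis half_gt_zero)
    define h where "h = min d1 d2 / 4"
    have h0: "h > 0" using d1 d2 unfolding h_def by simp
    have near: "dist (x1 + s, x2 + r) x < min d1 d2" if "s \<in> {0..h}" "r \<in> {0..h}" for s r
    proof -
      have "dist (x1 + s, x2 + r) x = norm (s, r)" unfolding x dist_norm by simp
      also have "\<dots> \<le> norm s + norm r" by (rule norm_Pair_le)
      also have "\<dots> \<le> 2 * h" using that by auto
      also have "\<dots> < min d1 d2" using h0 d1 d2 unfolding h_def by (auto simp: min_def)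
      finally show ?thesis .
    qed
    define \<Delta> where "\<Delta> = H (x1 + h, x2 + h) - H (x1 + h, x2 + 0) - H (x1 + 0, x2 + h) + H (x1 + 0, x2 + 0)"
    have A: "norm (\<Delta> - (h * h) *\<^sub>R pd2 (pd1 H) x) \<le> e/2 * h * h"
      unfolding \<Delta>_def
    proof (rule mixed_bound[OF less_imp_le[OF h0], where \<phi>="\<lambda>s r. H (x1 + s, x2 + r)"
          and P="\<lambda>s r. pd1 H (x1 + s, x2 + r)" and Q="\<lambda>s r. pd2 (pd1 H) (x1 + s, x2 + r)"])
      show "((\<lambda>s. H (x1 + s, x2 + r)) has_vector_derivative pd1 H (x1 + s, x2 + r)) (at s)" for s r
        by (rule slice1[OF H])
      show "((\<lambda>r. pd1 H (x1 + s, x2 + r)) has_vector_derivative pd2 (pd1 H) (x1 + s, x2 + r)) (at r)" for s r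
        by (rule slice2[OF s1])
      show "norm (pd2 (pd1 H) (x1 + s, x2 + r) - pd2 (pd1 H) x) \<le> e/2" if "s \<in> {0..h}" "r \<in> {0..h}" for s r
        using d1(2)[of "(x1 + s, x2 + r)"] near[OF that] by (simp add: dist_norm)
    qed
    have B: "norm (\<Delta> - (h * h) *\<^sub>R pd1 (pd2 H) x) \<le> e/2 * h * h"
    proof -
      have "norm (H (x1 + h, x2 + h) - H (x1 + 0, x2 + h) - H (x1 + h, x2 + 0) + H (x1 + 0, x2 + 0) - (h * h) *\<^sub>R pd1 (pd2 H) x) \<le> e/2 * h * h"
      proof (rule mixed_bound[OF less_imp_le[OF h0], where \<phi>="\<lambda>r s. H (x1 + s, x2 + r)"
            and P="\<lambda>r s. pd2 H (x1 + s, x2 + r)" and Q="\<lambda>r s. pd1 (pd2 H) (x1 + s, x2 + r)"])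
        show "((\<lambda>r. H (x1 + s, x2 + r)) has_vector_derivative pd2 H (x1 + s, x2 + r)) (at r)" for s r
          by (rule slice2[OF H])
        show "((\<lambda>s. pd2 H (x1 + s, x2 + r)) has_vector_derivative pd1 (pd2 H) (x1 + s, x2 + r)) (at s)" for s r
          by (rule slice1[OF s2])
        show "norm (pd1 (pd2 H) (x1 + s, x2 + r) - pd1 (pd2 H) x) \<le> e/2" if "r \<in> {0..h}" "s \<in> {0..h}" for s r
          using d2(2)[of "(x1 + s, x2 + r)"] near[of s r] that by (simp add: dist_norm)
      qed
      then show ?thesis unfolding \<Delta>_def by (simp add: algebra_simps)
    qed
    have "norm ((h * h) *\<^sub>R (pd2 (pd1 H) x - pd1 (pd2 H) x))
        = norm ((\<Delta> - (h * h) *\<^sub>R pd1 (pd2 H) x) - (\<Delta> - (h * h) *\<^sub>R pd2 (pd1 H) x))"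
      by (simp add: algebra_simps)
    also have "\<dots> \<le> norm (\<Delta> - (h * h) *\<^sub>R pd1 (pd2 H) x) + norm (\<Delta> - (h * h) *\<^sub>R pd2 (pd1 H) x)"
      by (rule norm_triangle_ineq4)
    also have "\<dots> \<le> e * (h * h)" using A B by (simp add: algebra_simps)
    finally have "(h * h) * norm (pd2 (pd1 H) x - pd1 (pd2 H) x) \<le> (h * h) * e"
      using h0 by (simp add: mult.commute)
    then have "norm (pd2 (pd1 H) x - pd1 (pd2 H) x) \<le> e"
      using h0 by (simp add: mult_le_cancel_left_pos)
    then show ?thesis by simp
  qed
  then have "norm (pd2 (pd1 H) x - pd1 (pd2 H) x) \<le> 0" by (rule field_le_epsilon)
  then show ?thesis by simp
qed

definition Bop :: "(real \<times> real \<Rightarrow> complex) \<Rightarrow> real \<times> real \<Rightarrow> complex" where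
  "Bop H = (\<lambda>x. pd2 H x - pd1 H x)"

lemma smooth2_Bop: "smooth2 H \<Longrightarrow> smooth2 (Bop H)"
  unfolding Bop_def by (intro smooth2_diff smooth2_pd1 smooth2_pd2)

lemma smooth2_Bop_pow: "smooth2 H \<Longrightarrow> smooth2 ((Bop ^^ k) H)"
  by (induction k) (auto intro: smooth2_Bop)

lemma pd1_Bop: "smooth2 H \<Longrightarrow> pd1 (Bop H) = Bop (pd1 H)"
  unfolding Bop_def
  by (simp add: pd_diff(1)[OF smooth2_pd2 smooth2_pd1] schwarz)

lemma pd1_Bop_pow: "smooth2 H \<Longrightarrow> pd1 ((Bop ^^ k) H) = (Bop ^^ k) (pd1 H)"
proof (induction k)
  case 0 then show ?case by simp
next
  case (Suc k)
  then show ?case using pd1_Bop[OF smooth2_Bop_pow[OF Suc.prems, of k]] by simp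
qed

lemma Bop_add: "smooth2 F \<Longrightarrow> smooth2 G \<Longrightarrow> Bop (\<lambda>x. F x + G x) = (\<lambda>x. Bop F x + Bop G x)"
  unfolding Bop_def by (simp add: pd_add fun_eq_iff algebra_simps)

lemma Bop_pow_add: "smooth2 F \<Longrightarrow> smooth2 G \<Longrightarrow> (Bop ^^ k) (\<lambda>x. F x + G x) = (\<lambda>x. (Bop ^^ k) F x + (Bop ^^ k) G x)"
proof (induction k)
  case 0 then show ?case by simp
next
  case (Suc k)
  then show ?case using Bop_add[OF smooth2_Bop_pow[OF Suc.prems(1)] smooth2_Bop_pow[OF Suc.prems(2)], of k k] by simp
qed

lemma line_pd1:
  assumes G: "smooth2 G" and z: "\<And>\<beta>. G (\<beta>, c) = 0"
  shows "pd1 G (\<beta>, c) = 0"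
proof -
  have "((\<lambda>s. G (\<beta> + s, c)) has_vector_derivative pd1 G (\<beta> + 0, c)) (at 0)"
    by (rule slice1[OF G])
  moreover have "(\<lambda>s. G (\<beta> + s, c)) = (\<lambda>s. 0)" using z by auto
  ultimately have "((\<lambda>s. 0) has_vector_derivative pd1 G (\<beta>, c)) (at 0)" by simp
  then show ?thesis using vector_derivative_unique_at has_vector_derivative_const by metis
qed

fun ap :: "bool list \<Rightarrow> (real \<times> real \<Rightarrow> complex) \<Rightarrow> real \<times> real \<Rightarrow> complex" where
  "ap [] F = F"
| "ap (b # bs) F = ap bs (if b then pd1 F else pd2 F)"

definition Flat :: "real \<Rightarrow> (real \<times> real \<Rightarrow> complex) \<Rightarrow> bool" where
  "Flat c D \<longleftrightarrow> smooth2 D \<and> (\<forall>ws \<beta>. ap ws D (\<beta>, c) = 0)"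

lemma Flat_pd1: "Flat c D \<Longrightarrow> Flat c (pd1 D)"
proof -
  assume F: "Flat c D"
  have "ap ws (pd1 D) (\<beta>, c) = 0" for ws \<beta>
    using F unfolding Flat_def by (metis ap.simps(2))
  then show ?thesis using F smooth2_pd1 unfolding Flat_def by blast
qed

lemma Flat_pd2: "Flat c D \<Longrightarrow> Flat c (pd2 D)"
proof -
  assume F: "Flat c D"
  have "ap ws (pd2 D) (\<beta>, c) = 0" for ws \<beta>
  proof -
    have "ap (False # ws) D (\<beta>, c) = 0" using F unfolding Flat_def by blast
    then show ?thesis by simp
  qed
  then show ?thesis using F smooth2_pd2 unfolding Flat_def by blast
qed

lemma Flat_vals:
  assumes "Flat c D"
  shows "D (\<beta>, c) = 0" "pd1 D (\<beta>, c) = 0" "pd2 D (\<beta>, c) = 0"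
proof -
  have "ap [] D (\<beta>, c) = 0" "ap [True] D (\<beta>, c) = 0" "ap [False] D (\<beta>, c) = 0"
    using assms unfolding Flat_def by blast+
  then show "D (\<beta>, c) = 0" "pd1 D (\<beta>, c) = 0" "pd2 D (\<beta>, c) = 0" by simp_all
qed

lemma flat_crit:
  assumes D: "smooth2 D" and z: "\<And>k \<beta>. (Bop ^^ k) D (\<beta>, c) = 0"
  shows "Flat c D"
proof -
  have "\<forall>H. smooth2 H \<and> (\<forall>k \<beta>. (Bop ^^ k) H (\<beta>, c) = 0) \<longrightarrow> (\<forall>\<beta>. ap ws H (\<beta>, c) = 0)" for ws
  proof (induction ws)
    case Nil
    show ?case
    proof (intro allI impI)
      fix H \<beta> assume "smooth2 H \<and> (\<forall>k \<beta>. (Bop ^^ k) H (\<beta>, c) = 0)"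
      then have "(Bop ^^ 0) H (\<beta>, c) = 0" by blast
      then show "ap [] H (\<beta>, c) = 0" by simp
    qed
  next
    case (Cons b ws)
    show ?case
    proof (intro allI impI)
      fix H assume H: "smooth2 H \<and> (\<forall>k \<beta>. (Bop ^^ k) H (\<beta>, c) = 0)"
      have p1: "smooth2 (pd1 H) \<and> (\<forall>k \<beta>. (Bop ^^ k) (pd1 H) (\<beta>, c) = 0)"
      proof (intro conjI allI)
        show "smooth2 (pd1 H)" using H smooth2_pd1 by blast
        fix k \<beta>
        have "(Bop ^^ k) (pd1 H) = pd1 ((Bop ^^ k) H)" using pd1_Bop_pow H by simp
        then show "(Bop ^^ k) (pd1 H) (\<beta>, c) = 0"
          using line_pd1[OF smooth2_Bop_pow[of H k]] H by simp
      qed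
      have p2: "smooth2 (pd2 H) \<and> (\<forall>k \<beta>. (Bop ^^ k) (pd2 H) (\<beta>, c) = 0)"
      proof (intro conjI allI)
        show "smooth2 (pd2 H)" using H smooth2_pd2 by blast
        fix k \<beta>
        have e: "pd2 H = (\<lambda>x. Bop H x + pd1 H x)" unfolding Bop_def by simp
        have "(Bop ^^ k) (pd2 H) = (\<lambda>x. (Bop ^^ k) (Bop H) x + (Bop ^^ k) (pd1 H) x)"
          unfolding e using Bop_pow_add smooth2_Bop smooth2_pd1 H by blast
        moreover have "(Bop ^^ k) (Bop H) = (Bop ^^ Suc k) H" by (simp add: funpow_Suc_right del: funpow.simps)
        moreover have "(Bop ^^ Suc k) H (\<beta>, c) = 0" using H by blast
        ultimately show "(Bop ^^ k) (pd2 H) (\<beta>, c) = 0" using H p1 by simp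
      qed
      show "ap (b # ws) H (\<beta>, c) = 0" for \<beta>
        using Cons.IH p1 p2 by simp
    qed
  qed
  then show ?thesis unfolding Flat_def using D z by blast
qed

lemma path_deriv:
  assumes H: "smooth2 H"
  shows "((\<lambda>t. H (a - t, c + t)) has_vector_derivative Bop H (a - t, c + t)) (at t)"
proof -
  have p: "((\<lambda>t. (a - t, c + t)) has_derivative (\<lambda>t. (- t, t))) (at t)"
    by (auto intro!: derivative_eq_intros has_derivative_Pair)
  show ?thesis
    using has_derivative_compose[OF p smooth2_deriv[OF H]]
    unfolding has_vector_derivative_def Bop_def by (simp add: algebra_simps scaleR_diff_right)
qed

lemma path_chain: "smooth2 H \<Longrightarrow> chain UNIV (\<lambda>k t. (Bop ^^ k) H (a - t, c + t))"
  unfolding chain_def using path_deriv smooth2_Bop_pow by simp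

lemma chain_diff: "chain S d \<Longrightarrow> chain S e \<Longrightarrow> chain S (\<lambda>k t. d k t - e k t)"
  unfolding chain_def by (auto intro: has_vector_derivative_diff)

lemma chain_refl:
  fixes w :: "nat \<Rightarrow> real \<Rightarrow> 'a::real_normed_vector"
  assumes "chain UNIV w"
  shows "chain UNIV (\<lambda>k t. ((-1) ^ k) *\<^sub>R w k (- t))"
  unfolding chain_def
proof (intro allI ballI)
  fix k and t :: real
  have "(w k has_vector_derivative w (Suc k) (- t)) (at (- t))" using assms unfolding chain_def by auto
  then have "((\<lambda>t. w k (- t)) has_vector_derivative (- 1) *\<^sub>R w (Suc k) (- t)) (at t)"
  proof -
    have u: "((\<lambda>x::real. - x) has_vector_derivative - 1) (at t)"
      using has_vector_derivative_minus[OF has_vector_derivative_id[of "at t"]] by simp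
    show ?thesis
      using vector_diff_chain_at[OF u, of "w k" "w (Suc k) (- t)"] \<open>(w k has_vector_derivative w (Suc k) (- t)) (at (- t))\<close>
      by (simp add: o_def)
  qed
  then have "((\<lambda>t. ((-1) ^ k) *\<^sub>R w k (- t)) has_vector_derivative ((-1) ^ k) *\<^sub>R ((- 1) *\<^sub>R w (Suc k) (- t))) (at t)"
    using has_vector_derivative_scaleR[OF DERIV_const[of "(-1) ^ k" "at t"] \<open>((\<lambda>t. w k (- t)) has_vector_derivative (- 1) *\<^sub>R w (Suc k) (- t)) (at t)\<close>]
    by simp
  then show "((\<lambda>t. ((-1) ^ k) *\<^sub>R w k (- t)) has_vector_derivative ((-1) ^ Suc k) *\<^sub>R w (Suc k) (- t)) (at t)"
    by simp
qed

lemma squeeze2g: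
  fixes f g h :: "'a \<Rightarrow> real"
  assumes "eventually (\<lambda>x. 0 \<le> f x) F" "eventually (\<lambda>x. f x \<le> g x + h x) F"
    "(g \<longlongrightarrow> 0) F" "(h \<longlongrightarrow> 0) F"
  shows "(f \<longlongrightarrow> 0) F"
proof (rule tendsto_sandwich[of "\<lambda>x. 0" f F "\<lambda>x. g x + h x"])
  show "((\<lambda>x. g x + h x) \<longlongrightarrow> 0) F" using tendsto_add[OF assms(3,4)] by simp
qed (use assms in auto)

lemma select_deriv:
  fixes G F1 F2 :: "real \<times> real \<Rightarrow> complex"
  assumes F1: "(F1 has_derivative L) (at x)" and F2: "(F2 has_derivative L) (at x)"
    and e: "F1 x = F2 x" and r: "r > 0"
    and sel: "\<And>y. y \<in> ball x r \<Longrightarrow> G y = F1 y \<or> G y = F2 y" and Gx: "G x = F1 x"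
  shows "(G has_derivative L) (at x)"
proof -
  have bl: "bounded_linear L" and l1: "((\<lambda>y. norm (F1 y - F1 x - L (y - x)) / norm (y - x)) \<longlongrightarrow> 0) (at x)"
    using F1 unfolding has_derivative_iff_norm by auto
  have l2: "((\<lambda>y. norm (F2 y - F2 x - L (y - x)) / norm (y - x)) \<longlongrightarrow> 0) (at x)"
    using F2 unfolding has_derivative_iff_norm by auto
  have "((\<lambda>y. norm (G y - G x - L (y - x)) / norm (y - x)) \<longlongrightarrow> 0) (at x)"
  proof (rule squeeze2g[OF _ _ l1 l2])
    show "\<forall>\<^sub>F y in at x. 0 \<le> norm (G y - G x - L (y - x)) / norm (y - x)" by simp
    have "norm (G y - G x - L (y - x)) / norm (y - x) \<le>
        norm (F1 y - F1 x - L (y - x)) / norm (y - x) + norm (F2 y - F2 x - L (y - x)) / norm (y - x)"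
      if "y \<in> ball x r" for y
      using sel[OF that] Gx e by (auto simp: add_nonneg_nonneg)
    then show "\<forall>\<^sub>F y in at x. norm (G y - G x - L (y - x)) / norm (y - x) \<le>
        norm (F1 y - F1 x - L (y - x)) / norm (y - x) + norm (F2 y - F2 x - L (y - x)) / norm (y - x)"
      using eventually_at_ball[OF r, of x UNIV] by (auto elim: eventually_mono)
  qed
  then show ?thesis unfolding has_derivative_iff_norm using bl by auto
qed

definition sh :: "real \<Rightarrow> real \<times> real \<Rightarrow> real \<times> real" where
  "sh s x = (fst x, snd x + s)"

lemma sh_aff: "sh s = aff 0 1 0 s 0 1"
  unfolding sh_def aff_def by (auto simp: fun_eq_iff)

lemma sh_deriv: "smooth2 F \<Longrightarrow>
  ((\<lambda>y. F (sh s y)) has_derivative (\<lambda>v. fst v *\<^sub>R pd1 F (sh s x) + snd v *\<^sub>R pd2 F (sh s x))) (at x)"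
  using comp_aff_deriv[OF smooth2_deriv, of F 0 1 0 s 0 1 x] unfolding sh_aff by simp

lemma smooth2_sh: "smooth2 F \<Longrightarrow> smooth2 (\<lambda>y. F (sh s y))"
  unfolding sh_aff by (rule smooth2_aff)

lemma pd_sh:
  assumes "smooth2 F"
  shows "pd1 (\<lambda>y. F (sh s y)) = (\<lambda>y. pd1 F (sh s y))" "pd2 (\<lambda>y. F (sh s y)) = (\<lambda>y. pd2 F (sh s y))"
  using pd_aff[OF assms, of 0 1 0 s 0 1] unfolding sh_aff by simp_all

lemma alpha_rep_eq:
  assumes "- (pi/2) \<le> \<alpha> - 2 * pi * of_int k" "\<alpha> - 2 * pi * of_int k < 3 * pi / 2"
  shows "alpha_rep \<alpha> = \<alpha> - 2 * pi * of_int k"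
proof -
  have "\<lfloor>(\<alpha> + pi / 2) / (2 * pi)\<rfloor> = k"
  proof (rule floor_unique)
    show "of_int k \<le> (\<alpha> + pi / 2) / (2 * pi)" using assms pi_gt_zero by (simp add: field_simps)
    show "(\<alpha> + pi / 2) / (2 * pi) < of_int k + 1" using assms pi_gt_zero by (simp add: field_simps)
  qed
  then show ?thesis unfolding alpha_rep_def by simp
qed

lemma alpha_rep_bounds: "- (pi/2) \<le> alpha_rep \<alpha> \<and> alpha_rep \<alpha> < 3 * pi / 2"
proof -
  define k where "k = \<lfloor>(\<alpha> + pi / 2) / (2 * pi)\<rfloor>"
  have "of_int k \<le> (\<alpha> + pi / 2) / (2 * pi)" "(\<alpha> + pi / 2) / (2 * pi) < of_int k + 1"
    unfolding k_def by linarith+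
  then have "2 * pi * of_int k \<le> \<alpha> + pi / 2" "\<alpha> + pi / 2 < 2 * pi * of_int k + 2 * pi"
    using pi_gt_zero by (simp_all add: field_simps)
  then show ?thesis unfolding alpha_rep_def k_def[symmetric] by simp
qed

definition Glue :: "(real \<times> real \<Rightarrow> complex) \<Rightarrow> (real \<times> real \<Rightarrow> complex) \<Rightarrow> real \<times> real \<Rightarrow> complex" where
  "Glue F K p = (let a = alpha_rep (snd p) in if a \<le> pi / 2 then F (fst p, a) else K (fst p, a))"

lemma Glue_at: "Glue P Q (\<beta>, \<alpha>) = (if alpha_rep \<alpha> \<le> pi / 2 then P (\<beta>, alpha_rep \<alpha>) else Q (\<beta>, alpha_rep \<alpha>))"
  by (simp add: Glue_def Let_def)

lemma ball_snd: "y \<in> ball x r \<Longrightarrow> \<bar>snd y - snd x\<bar> < (r::real)" for x y :: "real \<times> real"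
proof -
  assume "y \<in> ball x r"
  then have "norm (x - y) < r" by (simp add: dist_norm)
  moreover have "norm (snd (x - y)) \<le> norm (x - y)"
  proof -
    have "x - y = (fst (x - y), snd (x - y))" by (rule prod.collapse[symmetric])
    then show ?thesis using norm_snd_le[of "snd (x - y)" "fst (x - y)"] by metis
  qed
  ultimately show ?thesis by (simp add: abs_minus_commute)
qed

lemma Glue_deriv:
  assumes F: "smooth2 F" and K: "smooth2 K"
    and f1: "Flat (pi/2) (\<lambda>x. F x - K x)" and f2: "Flat (-(pi/2)) (\<lambda>x. F x - K (sh (2*pi) x))"
  shows "(Glue F K has_derivative (\<lambda>v. fst v *\<^sub>R Glue (pd1 F) (pd1 K) x + snd v *\<^sub>R Glue (pd2 F) (pd2 K) x)) (at x)"
proof -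
  obtain \<beta> \<alpha> where x: "x = (\<beta>, \<alpha>)" by (cases x)
  define k where "k = \<lfloor>(\<alpha> + pi/2)/(2*pi)\<rfloor>"
  define a where "a = alpha_rep \<alpha>"
  define s where "s = - (2 * pi * of_int k)"
  have a_s: "a = \<alpha> + s" unfolding a_def alpha_rep_def k_def s_def by simp
  have ab: "-(pi/2) \<le> a" "a < 3*pi/2" using alpha_rep_bounds unfolding a_def by auto
  have shx: "sh s x = (\<beta>, a)" unfolding sh_def x a_s by simp
  have rep: "alpha_rep t = t + s" if "-(pi/2) \<le> t + s" "t + s < 3*pi/2" for t
    using alpha_rep_eq[of t k] that unfolding s_def by simp
  have rep2: "alpha_rep t = t + (s + 2 * pi)" if "-(pi/2) \<le> t + (s + 2 * pi)" "t + (s + 2 * pi) < 3*pi/2" for t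
    using alpha_rep_eq[of t "k - 1"] that unfolding s_def by (simp add: algebra_simps)
  have GlF: "Glue P Q y = P (sh s y)" if "-(pi/2) \<le> snd y + s" "snd y + s \<le> pi/2" for P Q y
    using rep[of "snd y"] that pi_gt_zero unfolding Glue_def sh_def Let_def by auto
  have GlK: "Glue P Q y = Q (sh s y)" if "pi/2 < snd y + s" "snd y + s < 3*pi/2" for P Q y
    using rep[of "snd y"] that pi_gt_zero unfolding Glue_def sh_def Let_def by auto
  have GlK2: "Glue P Q y = Q (sh (s + 2*pi) y)" if "pi/2 < snd y + (s + 2*pi)" "snd y + (s + 2*pi) < 3*pi/2" for P Q y
    using rep2[of "snd y"] that pi_gt_zero unfolding Glue_def sh_def Let_def by auto
  have dF: "((\<lambda>y. F (sh s y)) has_derivative (\<lambda>v. fst v *\<^sub>R pd1 F (\<beta>, a) + snd v *\<^sub>R pd2 F (\<beta>, a))) (at x)"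
    using sh_deriv[OF F, of s x] shx by simp
  have dK: "((\<lambda>y. K (sh s y)) has_derivative (\<lambda>v. fst v *\<^sub>R pd1 K (\<beta>, a) + snd v *\<^sub>R pd2 K (\<beta>, a))) (at x)"
    using sh_deriv[OF K, of s x] shx by simp
  have ys: "\<bar>snd y + s - a\<bar> < r" if "y \<in> ball x r" for y r
    using ball_snd[OF that] unfolding x a_s by simp
  consider "a < pi/2" "-(pi/2) < a" | "pi/2 < a" | "a = pi/2" | "a = -(pi/2)"
    using ab by linarith
  then show ?thesis
  proof cases
    case 1
    define r where "r = min (a + pi/2) (pi/2 - a)"
    have r: "r > 0" using 1 unfolding r_def by simp
    have "(Glue F K has_derivative (\<lambda>v. fst v *\<^sub>R pd1 F (\<beta>, a) + snd v *\<^sub>R pd2 F (\<beta>, a))) (at x)"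
    proof (rule has_derivative_transform_within_open[OF dF open_ball])
      show "x \<in> ball x r" using r by simp
      fix y assume "y \<in> ball x r"
      then have "\<bar>snd y + s - a\<bar> < r" by (rule ys)
      then show "F (sh s y) = Glue F K y" using GlF[of y F K] unfolding r_def by (auto simp: abs_less_iff)
    qed
    moreover have "Glue (pd1 F) (pd1 K) x = pd1 F (\<beta>, a)" "Glue (pd2 F) (pd2 K) x = pd2 F (\<beta>, a)"
      using 1 unfolding x Glue_at a_def by auto
    ultimately show ?thesis by simp
  next
    case 2
    define r where "r = min (a - pi/2) (3*pi/2 - a)"
    have r: "r > 0" using 2 ab unfolding r_def by simp
    have "(Glue F K has_derivative (\<lambda>v. fst v *\<^sub>R pd1 K (\<beta>, a) + snd v *\<^sub>R pd2 K (\<beta>, a))) (at x)"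
    proof (rule has_derivative_transform_within_open[OF dK open_ball])
      show "x \<in> ball x r" using r by simp
      fix y assume "y \<in> ball x r"
      then have "\<bar>snd y + s - a\<bar> < r" by (rule ys)
      then show "K (sh s y) = Glue F K y" using GlK[of y F K] unfolding r_def by (auto simp: abs_less_iff)
    qed
    moreover have "Glue (pd1 F) (pd1 K) x = pd1 K (\<beta>, a)" "Glue (pd2 F) (pd2 K) x = pd2 K (\<beta>, a)"
      using 2 unfolding x Glue_at a_def by auto
    ultimately show ?thesis by simp
  next
    case 3
    have v: "F (\<beta>, a) = K (\<beta>, a)" "pd1 F (\<beta>, a) = pd1 K (\<beta>, a)" "pd2 F (\<beta>, a) = pd2 K (\<beta>, a)"
      unfolding 3 using Flat_vals[OF f1, of \<beta>] pd_diff[OF F K] by auto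
    have "(Glue F K has_derivative (\<lambda>v. fst v *\<^sub>R pd1 F (\<beta>, a) + snd v *\<^sub>R pd2 F (\<beta>, a))) (at x)"
    proof (rule select_deriv[OF dF _ _ pi_gt_zero])
      show "((\<lambda>y. K (sh s y)) has_derivative (\<lambda>v. fst v *\<^sub>R pd1 F (\<beta>, a) + snd v *\<^sub>R pd2 F (\<beta>, a))) (at x)"
        using dK v by simp
      show "F (sh s x) = K (sh s x)" using v shx by simp
      fix y assume "y \<in> ball x pi"
      then have "\<bar>snd y + s - a\<bar> < pi" by (rule ys)
      then show "Glue F K y = F (sh s y) \<or> Glue F K y = K (sh s y)"
        using GlF[of y F K] GlK[of y F K] 3 by (cases "snd y + s \<le> pi/2") (auto simp: abs_less_iff)
    next
      have "\<alpha> + s = pi/2" using a_s 3 by simp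
      then show "Glue F K x = F (sh s x)" using GlF[of x F K] pi_gt_zero unfolding x by simp
    qed
    moreover have "Glue (pd1 F) (pd1 K) x = pd1 F (\<beta>, a)" "Glue (pd2 F) (pd2 K) x = pd2 F (\<beta>, a)"
      using 3 unfolding x Glue_at a_def by auto
    ultimately show ?thesis by simp
  next
    case 4
    have shx2: "sh (s + 2*pi) x = (\<beta>, a + 2*pi)" unfolding sh_def x a_s by simp
    have dK2: "((\<lambda>y. K (sh (s + 2*pi) y)) has_derivative (\<lambda>v. fst v *\<^sub>R pd1 K (\<beta>, a + 2*pi) + snd v *\<^sub>R pd2 K (\<beta>, a + 2*pi))) (at x)"
      using sh_deriv[OF K, of "s + 2*pi" x] shx2 by simp
    have shb: "sh (2*pi) (\<beta>, a) = (\<beta>, a + 2*pi)" unfolding sh_def by simp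
    have pdd: "pd1 (\<lambda>x. F x - K (sh (2*pi) x)) = (\<lambda>x. pd1 F x - pd1 K (sh (2*pi) x))"
      "pd2 (\<lambda>x. F x - K (sh (2*pi) x)) = (\<lambda>x. pd2 F x - pd2 K (sh (2*pi) x))"
      using pd_diff[OF F smooth2_sh[OF K, of "2*pi"]] pd_sh[OF K, of "2*pi"] by simp_all
    have v: "F (\<beta>, a) = K (\<beta>, a + 2*pi)" "pd1 F (\<beta>, a) = pd1 K (\<beta>, a + 2*pi)" "pd2 F (\<beta>, a) = pd2 K (\<beta>, a + 2*pi)"
      using Flat_vals[OF f2, of \<beta>] pdd shb unfolding 4 by auto
    have "(Glue F K has_derivative (\<lambda>v. fst v *\<^sub>R pd1 F (\<beta>, a) + snd v *\<^sub>R pd2 F (\<beta>, a))) (at x)"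
    proof (rule select_deriv[OF dF _ _ pi_gt_zero])
      show "((\<lambda>y. K (sh (s + 2*pi) y)) has_derivative (\<lambda>v. fst v *\<^sub>R pd1 F (\<beta>, a) + snd v *\<^sub>R pd2 F (\<beta>, a))) (at x)"
        using dK2 v by simp
      show "F (sh s x) = K (sh (s + 2*pi) x)" using v shx shx2 by simp
      fix y assume "y \<in> ball x pi"
      then have "\<bar>snd y + s - a\<bar> < pi" by (rule ys)
      then show "Glue F K y = F (sh s y) \<or> Glue F K y = K (sh (s + 2*pi) y)"
        using GlF[of y F K] GlK2[of y F K] 4 by (cases "- (pi/2) \<le> snd y + s") (auto simp: abs_less_iff)
    next
      have "\<alpha> + s = -(pi/2)" using a_s 4 by simp
      then show "Glue F K x = F (sh s x)" using GlF[of x F K] pi_gt_zero unfolding x by simp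
    qed
    moreover have "Glue (pd1 F) (pd1 K) x = pd1 F (\<beta>, a)" "Glue (pd2 F) (pd2 K) x = pd2 F (\<beta>, a)"
      using 4 unfolding x Glue_at a_def by auto
    ultimately show ?thesis by simp
  qed
qed

definition GCond :: "(real \<times> real \<Rightarrow> complex) \<Rightarrow> (real \<times> real \<Rightarrow> complex) \<Rightarrow> bool" where
  "GCond F K \<longleftrightarrow> smooth2 F \<and> smooth2 K \<and> Flat (pi/2) (\<lambda>x. F x - K x)
     \<and> Flat (-(pi/2)) (\<lambda>x. F x - K (sh (2*pi) x))"

lemma GCond_pd:
  assumes "GCond F K"
  shows "GCond (pd1 F) (pd1 K)" "GCond (pd2 F) (pd2 K)"
proof -
  have F: "smooth2 F" and K: "smooth2 K" and f1: "Flat (pi/2) (\<lambda>x. F x - K x)"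
    and f2: "Flat (-(pi/2)) (\<lambda>x. F x - K (sh (2*pi) x))"
    using assms unfolding GCond_def by auto
  have e1: "pd1 (\<lambda>x. F x - K x) = (\<lambda>x. pd1 F x - pd1 K x)" "pd2 (\<lambda>x. F x - K x) = (\<lambda>x. pd2 F x - pd2 K x)"
    using pd_diff[OF F K] by simp_all
  have e2: "pd1 (\<lambda>x. F x - K (sh (2*pi) x)) = (\<lambda>x. pd1 F x - pd1 K (sh (2*pi) x))"
      "pd2 (\<lambda>x. F x - K (sh (2*pi) x)) = (\<lambda>x. pd2 F x - pd2 K (sh (2*pi) x))"
    using pd_diff[OF F smooth2_sh[OF K, of "2*pi"]] pd_sh[OF K, of "2*pi"] by simp_all
  show "GCond (pd1 F) (pd1 K)" unfolding GCond_def
    using smooth2_pd1[OF F] smooth2_pd1[OF K] Flat_pd1[OF f1] Flat_pd1[OF f2] e1 e2 by simp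
  show "GCond (pd2 F) (pd2 K)" unfolding GCond_def
    using smooth2_pd2[OF F] smooth2_pd2[OF K] Flat_pd2[OF f1] Flat_pd2[OF f2] e1 e2 by simp
qed

lemma Glue_deriv': "GCond F K \<Longrightarrow>
  (Glue F K has_derivative (\<lambda>v. fst v *\<^sub>R Glue (pd1 F) (pd1 K) x + snd v *\<^sub>R Glue (pd2 F) (pd2 K) x)) (at x)"
  unfolding GCond_def using Glue_deriv by blast

lemma Glue_Ck2: "GCond F K \<Longrightarrow> Ck2 n (Glue F K)"
proof (induction n arbitrary: F K)
  case 0
  have "\<forall>x. isCont (Glue F K) x" using Glue_deriv'[OF 0] has_derivative_continuous by blast
  then show ?case by (simp add: continuous_at_imp_continuous_on Ck2_0)
next
  case (Suc n)
  show ?case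
    by (rule Ck2_SucI[OF Glue_deriv'[OF Suc.prems]]) (use Suc.IH GCond_pd[OF Suc.prems] in auto)
qed

lemma Glue_smooth: "GCond F K \<Longrightarrow> smooth2 (Glue F K)"
  unfolding smooth2_def using Glue_Ck2 by blast




lemma atan_e_inf[simp]: "atan_e \<infinity> = pi/2" "atan_e (-\<infinity>) = -(pi/2)"
  using atan_e.simps(2,3) by (simp_all only: PInfty_eq_infinity MInfty_eq_minfinity)

lemma mu_H_inf[simp]: "mu_H \<infinity> = 0" "mu_H (-\<infinity>) = 0"
  using mu_H.simps(2,3) by (simp_all only: PInfty_eq_infinity MInfty_eq_minfinity)

lemma atan_e_bounds: "atan_e a \<in> Iplus"
proof (cases a)
  case (real r)
  then show ?thesis using arctan_lbound[of r] arctan_ubound[of r] unfolding Iplus_def by auto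
qed (auto simp: Iplus_def)

lemma atan_e_minus: "atan_e (- a) = - atan_e a"
  by (cases a) (auto simp: arctan_minus)

lemma atan_e_surj: "\<alpha> \<in> Iplus \<Longrightarrow> \<exists>a. atan_e a = \<alpha>"
proof -
  assume "\<alpha> \<in> Iplus"
  then consider "\<alpha> = pi/2" | "\<alpha> = -(pi/2)" | "-(pi/2) < \<alpha> \<and> \<alpha> < pi/2"
    unfolding Iplus_def by fastforce
  then show ?thesis
  proof cases
    case 1 then show ?thesis by (intro exI[of _ PInfty]) simp
  next
    case 2 then show ?thesis by (intro exI[of _ MInfty]) simp
  next
    case 3 then show ?thesis by (intro exI[of _ "ereal (tan \<alpha>)"]) (simp add: arctan_tan)
  qed
qed

lemma arccos_pos_half:
  assumes "0 < \<mu>" "\<mu> < 1"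
  shows "0 < arccos \<mu>" "arccos \<mu> < pi/2"
proof -
  show "0 < arccos \<mu>" using arccos_lt_bounded[of \<mu>] assms by auto
  have "arccos \<mu> < arccos 0" using arccos_less_mono[of \<mu> 0] assms by simp
  then show "arccos \<mu> < pi/2" by simp
qed

lemma the_pos:
  assumes m: "0 < \<mu>" "\<mu> < 1"
  shows "atan_e (THE a. a > 0 \<and> mu_H a = \<mu>) = arccos \<mu>"
proof -
  have P: "atan_e a = arccos \<mu>" if "a > 0" "mu_H a = \<mu>" for a
  proof (cases a)
    case (real r)
    then have r: "r > 0" using that by simp
    have "cos (arctan r) = \<mu>" using that real by (simp add: cos_arctan)
    moreover have "0 < arctan r" using r by simp
    then have "0 \<le> arctan r" "arctan r \<le> pi" using arctan_ubound[of r] pi_gt_zero by linarith+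
    ultimately have "arctan r = arccos \<mu>" using arccos_cos[of "arctan r"] by simp
    then show ?thesis using real by simp
  next
    case PInf then show ?thesis using that m by simp
  next
    case MInf then show ?thesis using that by simp
  qed
  define r where "r = tan (arccos \<mu>)"
  have ar: "arctan r = arccos \<mu>" unfolding r_def using arccos_pos_half[OF m] by (intro arctan_tan) auto
  have ex: "ereal r > 0 \<and> mu_H (ereal r) = \<mu>"
  proof
    have "0 < arctan r" using ar arccos_pos_half[OF m] by simp
    then show "ereal r > 0" by simp
    have "mu_H (ereal r) = cos (arctan r)" by (simp add: cos_arctan)
    also have "\<dots> = \<mu>" using ar m by simp
    finally show "mu_H (ereal r) = \<mu>" .
  qed
  have uniq: "a = ereal r" if "a > 0 \<and> mu_H a = \<mu>" for a
  proof -
    from that obtain r' where r': "a = ereal r'"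
      using m by (cases a) auto
    have "arctan r' = arccos \<mu>" using P[of a] that r' by simp
    then have "tan (arctan r') = tan (arccos \<mu>)" by simp
    then have "r' = r" unfolding r_def tan_arctan .
    then show ?thesis using r' by simp
  qed
  have "(THE a. a > 0 \<and> mu_H a = \<mu>) = ereal r"
    using ex uniq by (intro the_equality) auto
  then show ?thesis using ar by simp
qed

lemma the_neg:
  assumes m: "0 < \<mu>" "\<mu> < 1"
  shows "atan_e (THE a. a < 0 \<and> mu_H a = \<mu>) = - arccos \<mu>"
proof -
  have P: "atan_e a = - arccos \<mu>" if "a < 0" "mu_H a = \<mu>" for a
  proof (cases a)
    case (real r)
    then have r: "r < 0" using that by simp
    have "cos (- arctan r) = \<mu>" using that real by (simp add: cos_arctan)
    moreover have "arctan r < 0" using r by simp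
    then have "0 \<le> - arctan r" "- arctan r \<le> pi" using arctan_lbound[of r] pi_gt_zero by linarith+
    ultimately have "- arctan r = arccos \<mu>" using arccos_cos[of "- arctan r"] by simp
    then show ?thesis using real by simp
  next
    case PInf then show ?thesis using that by simp
  next
    case MInf then show ?thesis using that m by simp
  qed
  define r where "r = - tan (arccos \<mu>)"
  have ar: "arctan r = - arccos \<mu>" unfolding r_def arctan_minus using arccos_pos_half[OF m] by (subst arctan_tan) auto
  have ex: "ereal r < 0 \<and> mu_H (ereal r) = \<mu>"
  proof
    have "arctan r < 0" using ar arccos_pos_half[OF m] by simp
    then show "ereal r < 0" by simp
    have "mu_H (ereal r) = cos (arctan r)" by (simp add: cos_arctan)
    also have "\<dots> = \<mu>" using ar m by simp
    finally show "mu_H (ereal r) = \<mu>" .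
  qed
  have uniq: "a = ereal r" if "a < 0 \<and> mu_H a = \<mu>" for a
  proof -
    from that obtain r' where r': "a = ereal r'"
      using m by (cases a) auto
    have "arctan r' = - arccos \<mu>" using P[of a] that r' by simp
    then have "tan (arctan r') = - tan (arccos \<mu>)" by (simp add: tan_minus)
    then have "r' = r" unfolding r_def tan_arctan .
    then show ?thesis using r' by simp
  qed
  have "(THE a. a < 0 \<and> mu_H a = \<mu>) = ereal r"
    using ex uniq by (intro the_equality) auto
  then show ?thesis using ar by simp
qed

lemma A_lo: "-(pi/2) \<le> \<alpha> \<Longrightarrow> \<alpha> \<le> pi/2 \<Longrightarrow> A_plus u \<beta> \<alpha> = u \<beta> \<alpha>"
  using alpha_rep_eq[of \<alpha> 0] pi_gt_zero unfolding A_plus_def Let_def by auto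

lemma A_hi: "pi/2 < \<alpha> \<Longrightarrow> \<alpha> < 3*pi/2 \<Longrightarrow> A_plus u \<beta> \<alpha> = u (\<beta> + pi + 2*\<alpha>) (pi - \<alpha>)"
  using alpha_rep_eq[of \<alpha> 0] pi_gt_zero unfolding A_plus_def Let_def SE_def by auto

lemma A_neg: "-(3*pi/2) < \<alpha> \<Longrightarrow> \<alpha> < -(pi/2) \<Longrightarrow>
  A_plus u \<beta> \<alpha> = u (\<beta> + pi + 2*(\<alpha> + 2*pi)) (pi - (\<alpha> + 2*pi))"
proof -
  assume a: "-(3*pi/2) < \<alpha>" "\<alpha> < -(pi/2)"
  have "alpha_rep \<alpha> = \<alpha> + 2*pi" using alpha_rep_eq[of \<alpha> "-1"] a by simp
  then show ?thesis using a unfolding A_plus_def Let_def SE_def by auto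
qed

lemma per2: "Cinf_plus u \<Longrightarrow> \<alpha> \<in> Iplus \<Longrightarrow> u (\<beta> + 2*pi) \<alpha> = u \<beta> \<alpha>"
  unfolding Cinf_plus_def by blast

lemma per4: "Cinf_plus u \<Longrightarrow> \<alpha> \<in> Iplus \<Longrightarrow> u (\<beta> + 4*pi) \<alpha> = u \<beta> \<alpha>"
  using per2[of u \<alpha> "\<beta> + 2*pi"] per2[of u \<alpha> \<beta>] by (simp add: algebra_simps)

lemma arc_facts:
  assumes "0 < \<mu>" "\<mu> < 1"
  shows "pi/2 - arcsin \<mu> = arccos \<mu>" "\<bar>arcsin \<mu>\<bar> < pi/2"
  using arccos_arcsin_eq[of \<mu>] arcsin_lt_bounded[of \<mu>] assms by auto

lemma fwd_pos:
  assumes cp: "Cinf_plus u" and F: "smooth2 F" and FA: "\<And>\<beta> \<alpha>. F (\<beta>, \<alpha>) = A_plus u \<beta> \<alpha>"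
    and hu: "\<And>\<beta> a. h \<beta> a = u \<beta> (atan_e a)"
  shows "odd_taylor_vanish (h_coord_pos h)"
  unfolding odd_taylor_vanish_def
proof (intro allI)
  fix \<theta> :: real and N :: nat
  define \<theta>' where "\<theta>' = \<theta> - pi/2"
  define w where "w = (\<lambda>k t. (Bop ^^ k) F (\<theta>' - t, pi/2 + t))"
  have ch: "chain UNIV w" unfolding w_def by (rule path_chain[OF F])
  have w0: "w 0 t = A_plus u (\<theta>' - t) (pi/2 + t)" for t unfolding w_def using FA by simp
  have hlp: "w 0 t = w 0 (- t)" if "0 < t" "t < pi/2" for t
  proof -
    have "w 0 t = u (\<theta>' - t + pi + 2 * (pi/2 + t)) (pi - (pi/2 + t))"
      unfolding w0 using that by (intro A_hi) auto
    also have "\<dots> = u (\<theta>' + t + 2*pi) (pi/2 - t)" by (simp add: algebra_simps)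
    also have "\<dots> = u (\<theta>' + t) (pi/2 - t)" using per2[OF cp] that unfolding Iplus_def by simp
    also have "\<dots> = w 0 (- t)" unfolding w0 using that by (subst A_lo) auto
    finally show ?thesis .
  qed
  have ev: "w 0 (- t) = w 0 t" if "\<bar>t\<bar> < pi/2" for t
  proof (cases "t = 0")
    case False
    then consider "0 < t" | "t < 0" by linarith
    then show ?thesis
    proof cases
      case 1 then show ?thesis using hlp[of t] that by simp
    next
      case 2 then show ?thesis using hlp[of "- t"] that by simp
    qed
  qed simp
  obtain c where c: "\<forall>j\<le>N. odd j \<longrightarrow> c j = 0"
    "((\<lambda>\<mu>. norm (w 0 (arcsin \<mu>) - (\<Sum>j\<le>N. c j * of_real \<mu> ^ j)) / \<mu> ^ N) \<longlongrightarrow> 0) (at_right 0)"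
    using even_expansion[OF ch ev] by blast
  have eq: "h_coord_pos h \<theta> \<mu> = w 0 (arcsin \<mu>)" if "\<mu> \<in> {0<..<1}" for \<mu>
  proof -
    have m: "0 < \<mu>" "\<mu> < 1" using that by auto
    have "h_coord_pos h \<theta> \<mu> = u (\<theta> - arccos \<mu>) (arccos \<mu>)"
      unfolding h_coord_pos_def Let_def hu the_pos[OF m] ..
    also have "\<dots> = A_plus u (\<theta> - arccos \<mu>) (arccos \<mu>)"
      using arccos_pos_half[OF m] by (subst A_lo) auto
    also have "\<dots> = w 0 (- arcsin \<mu>)"
    proof -
      have ac: "arccos \<mu> = pi/2 - arcsin \<mu>" using arccos_arcsin_eq[of \<mu>] m by auto
      have e1: "A_plus u (\<theta> - arccos \<mu>) (arccos \<mu>) = A_plus u (\<theta>' - (- arcsin \<mu>)) (pi/2 + (- arcsin \<mu>))"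
        unfolding ac \<theta>'_def by (simp add: algebra_simps)
      show ?thesis unfolding w0 by (rule e1)
    qed
    also have "\<dots> = w 0 (arcsin \<mu>)" using ev arc_facts[OF m] by simp
    finally show ?thesis .
  qed
  have evq: "\<forall>\<^sub>F \<mu> in at_right 0. norm (w 0 (arcsin \<mu>) - (\<Sum>j\<le>N. c j * of_real \<mu> ^ j)) / \<mu> ^ N
      = norm (h_coord_pos h \<theta> \<mu> - (\<Sum>j\<le>N. c j * of_real \<mu> ^ j)) / \<mu> ^ N"
    by (rule eventually_at_rightI[of 0 1]) (use eq in auto)
  have "((\<lambda>\<mu>. norm (h_coord_pos h \<theta> \<mu> - (\<Sum>j\<le>N. c j * of_real \<mu> ^ j)) / \<mu> ^ N) \<longlongrightarrow> 0) (at_right 0)"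
    using c(2) by (rule tendsto_cong[OF evq, THEN iffD1])
  then show "\<exists>c. (\<forall>j\<le>N. odd j \<longrightarrow> c j = 0) \<and>
      ((\<lambda>\<mu>. norm (h_coord_pos h \<theta> \<mu> - (\<Sum>j\<le>N. c j * of_real \<mu> ^ j)) / \<mu> ^ N) \<longlongrightarrow> 0) (at_right 0)"
    using c(1) by blast
qed

lemma fwd_neg:
  assumes cp: "Cinf_plus u" and F: "smooth2 F" and FA: "\<And>\<beta> \<alpha>. F (\<beta>, \<alpha>) = A_plus u \<beta> \<alpha>"
    and hu: "\<And>\<beta> a. h \<beta> a = u \<beta> (atan_e a)"
  shows "odd_taylor_vanish (h_coord_neg h)"
  unfolding odd_taylor_vanish_def
proof (intro allI)
  fix \<theta> :: real and N :: nat
  define \<theta>' where "\<theta>' = \<theta> + pi/2"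
  define w where "w = (\<lambda>k t. (Bop ^^ k) F (\<theta>' - t, -(pi/2) + t))"
  have ch: "chain UNIV w" unfolding w_def by (rule path_chain[OF F])
  have w0: "w 0 t = A_plus u (\<theta>' - t) (-(pi/2) + t)" for t unfolding w_def using FA by simp
  have hlp: "w 0 (- t) = w 0 t" if "0 < t" "t < pi/2" for t
  proof -
    have "w 0 (- t) = u (\<theta>' + t + pi + 2 * (-(pi/2) - t + 2*pi)) (pi - (-(pi/2) - t + 2*pi))"
      unfolding w0 using that by (subst A_neg) auto
    also have "\<dots> = u (\<theta>' - t + 4*pi) (-(pi/2) + t)" by (simp add: algebra_simps)
    also have "\<dots> = u (\<theta>' - t) (-(pi/2) + t)" using per4[OF cp] that unfolding Iplus_def by simp
    also have "\<dots> = w 0 t" unfolding w0 using that by (subst A_lo) auto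
    finally show ?thesis .
  qed
  have ev: "w 0 (- t) = w 0 t" if "\<bar>t\<bar> < pi/2" for t
  proof (cases "t = 0")
    case False
    then consider "0 < t" | "t < 0" by linarith
    then show ?thesis
    proof cases
      case 1 then show ?thesis using hlp[of t] that by simp
    next
      case 2 then show ?thesis using hlp[of "- t"] that by simp
    qed
  qed simp
  obtain c where c: "\<forall>j\<le>N. odd j \<longrightarrow> c j = 0"
    "((\<lambda>\<mu>. norm (w 0 (arcsin \<mu>) - (\<Sum>j\<le>N. c j * of_real \<mu> ^ j)) / \<mu> ^ N) \<longlongrightarrow> 0) (at_right 0)"
    using even_expansion[OF ch ev] by blast
  have eq: "h_coord_neg h \<theta> \<mu> = w 0 (arcsin \<mu>)" if "\<mu> \<in> {0<..<1}" for \<mu>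
  proof -
    have m: "0 < \<mu>" "\<mu> < 1" using that by auto
    have "h_coord_neg h \<theta> \<mu> = u (\<theta> + arccos \<mu>) (- arccos \<mu>)"
      unfolding h_coord_neg_def Let_def hu the_neg[OF m] by simp
    also have "\<dots> = A_plus u (\<theta> + arccos \<mu>) (- arccos \<mu>)"
      using arccos_pos_half[OF m] by (subst A_lo) auto
    also have "\<dots> = w 0 (arcsin \<mu>)"
    proof -
      have ac: "arccos \<mu> = pi/2 - arcsin \<mu>" using arccos_arcsin_eq[of \<mu>] m by auto
      have e1: "A_plus u (\<theta> + arccos \<mu>) (- arccos \<mu>) = A_plus u (\<theta>' - arcsin \<mu>) (-(pi/2) + arcsin \<mu>)"
        unfolding ac \<theta>'_def by (simp add: algebra_simps)
      show ?thesis unfolding w0 by (rule e1)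
    qed
    finally show ?thesis .
  qed
  have evq: "\<forall>\<^sub>F \<mu> in at_right 0. norm (w 0 (arcsin \<mu>) - (\<Sum>j\<le>N. c j * of_real \<mu> ^ j)) / \<mu> ^ N
      = norm (h_coord_neg h \<theta> \<mu> - (\<Sum>j\<le>N. c j * of_real \<mu> ^ j)) / \<mu> ^ N"
    by (rule eventually_at_rightI[of 0 1]) (use eq in auto)
  have "((\<lambda>\<mu>. norm (h_coord_neg h \<theta> \<mu> - (\<Sum>j\<le>N. c j * of_real \<mu> ^ j)) / \<mu> ^ N) \<longlongrightarrow> 0) (at_right 0)"
    using c(2) by (rule tendsto_cong[OF evq, THEN iffD1])
  then show "\<exists>c. (\<forall>j\<le>N. odd j \<longrightarrow> c j = 0) \<and>
      ((\<lambda>\<mu>. norm (h_coord_neg h \<theta> \<mu> - (\<Sum>j\<le>N. c j * of_real \<mu> ^ j)) / \<mu> ^ N) \<longlongrightarrow> 0) (at_right 0)"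
    using c(1) by blast
qed

lemma bwd_pos_parity:
  assumes F0: "smooth2 F0" and uF: "\<And>\<beta> \<alpha>. \<alpha> \<in> Iplus \<Longrightarrow> F0 (\<beta>, \<alpha>) = u \<beta> \<alpha>"
    and hu: "\<And>\<beta> a. h \<beta> a = u \<beta> (atan_e a)"
    and otv: "odd_taylor_vanish (h_coord_pos h)" and k: "odd k"
  shows "(Bop ^^ k) F0 (\<theta>', pi/2) = 0"
proof -
  define \<theta> where "\<theta> = \<theta>' + pi/2"
  define w where "w = (\<lambda>k t. (Bop ^^ k) F0 (\<theta>' - t, pi/2 + t))"
  have ch: "chain UNIV w" unfolding w_def by (rule path_chain[OF F0])
  define w' where "w' = (\<lambda>k t. ((-1) ^ k) *\<^sub>R w k (- t))"
  have ch': "chain UNIV w'" unfolding w'_def by (rule chain_refl[OF ch])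
  have eq: "h_coord_pos h \<theta> \<mu> = w' 0 (arcsin \<mu>)" if "\<mu> \<in> {0<..<1}" for \<mu>
  proof -
    have m: "0 < \<mu>" "\<mu> < 1" using that by auto
    have ac: "arccos \<mu> = pi/2 - arcsin \<mu>" using arccos_arcsin_eq[of \<mu>] m by auto
    have "h_coord_pos h \<theta> \<mu> = u (\<theta> - arccos \<mu>) (arccos \<mu>)"
      unfolding h_coord_pos_def Let_def hu the_pos[OF m] ..
    also have "\<dots> = F0 (\<theta> - arccos \<mu>, arccos \<mu>)"
      using arccos_pos_half[OF m] by (subst uF) (auto simp: Iplus_def)
    also have "\<dots> = F0 (\<theta>' - (- arcsin \<mu>), pi/2 + (- arcsin \<mu>))"
      unfolding ac \<theta>_def by (simp add: algebra_simps)
    also have "\<dots> = w' 0 (arcsin \<mu>)" unfolding w'_def w_def by simp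
    finally show ?thesis .
  qed
  have tay: "\<exists>c. (\<forall>j\<le>N. odd j \<longrightarrow> c j = 0) \<and>
      ((\<lambda>\<mu>. norm (w' 0 (arcsin \<mu>) - (\<Sum>j\<le>N. c j * of_real \<mu> ^ j)) / \<mu> ^ N) \<longlongrightarrow> 0) (at_right 0)" for N
  proof -
    obtain c where c: "\<forall>j\<le>N. odd j \<longrightarrow> c j = 0"
      "((\<lambda>\<mu>. norm (h_coord_pos h \<theta> \<mu> - (\<Sum>j\<le>N. c j * of_real \<mu> ^ j)) / \<mu> ^ N) \<longlongrightarrow> 0) (at_right 0)"
      using otv unfolding odd_taylor_vanish_def by blast
    have evq: "\<forall>\<^sub>F \<mu> in at_right 0. norm (w' 0 (arcsin \<mu>) - (\<Sum>j\<le>N. c j * of_real \<mu> ^ j)) / \<mu> ^ N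
        = norm (h_coord_pos h \<theta> \<mu> - (\<Sum>j\<le>N. c j * of_real \<mu> ^ j)) / \<mu> ^ N"
      by (rule eventually_at_rightI[of 0 1]) (use eq in auto)
    have "((\<lambda>\<mu>. norm (w' 0 (arcsin \<mu>) - (\<Sum>j\<le>N. c j * of_real \<mu> ^ j)) / \<mu> ^ N) \<longlongrightarrow> 0) (at_right 0)"
      using c(2) by (rule tendsto_cong[OF evq, THEN iffD2])
    then show ?thesis using c(1) by blast
  qed
  have "w' k 0 = 0" by (rule odd_derivs_zero[OF ch' tay k])
  then have "w k 0 = 0" unfolding w'_def by simp
  then show ?thesis unfolding w_def by simp
qed

lemma bwd_neg_parity:
  assumes F0: "smooth2 F0" and uF: "\<And>\<beta> \<alpha>. \<alpha> \<in> Iplus \<Longrightarrow> F0 (\<beta>, \<alpha>) = u \<beta> \<alpha>"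
    and hu: "\<And>\<beta> a. h \<beta> a = u \<beta> (atan_e a)"
    and otv: "odd_taylor_vanish (h_coord_neg h)" and k: "odd k"
  shows "(Bop ^^ k) F0 (\<theta>', -(pi/2)) = 0"
proof -
  define \<theta> where "\<theta> = \<theta>' - pi/2"
  define w where "w = (\<lambda>k t. (Bop ^^ k) F0 (\<theta>' - t, -(pi/2) + t))"
  have ch: "chain UNIV w" unfolding w_def by (rule path_chain[OF F0])
  have eq: "h_coord_neg h \<theta> \<mu> = w 0 (arcsin \<mu>)" if "\<mu> \<in> {0<..<1}" for \<mu>
  proof -
    have m: "0 < \<mu>" "\<mu> < 1" using that by auto
    have ac: "arccos \<mu> = pi/2 - arcsin \<mu>" using arccos_arcsin_eq[of \<mu>] m by auto
    have "h_coord_neg h \<theta> \<mu> = u (\<theta> + arccos \<mu>) (- arccos \<mu>)"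
      unfolding h_coord_neg_def Let_def hu the_neg[OF m] by simp
    also have "\<dots> = F0 (\<theta> + arccos \<mu>, - arccos \<mu>)"
      using arccos_pos_half[OF m] by (subst uF) (auto simp: Iplus_def)
    also have "\<dots> = F0 (\<theta>' - arcsin \<mu>, -(pi/2) + arcsin \<mu>)"
      unfolding ac \<theta>_def by (simp add: algebra_simps)
    also have "\<dots> = w 0 (arcsin \<mu>)" unfolding w_def by simp
    finally show ?thesis .
  qed
  have tay: "\<exists>c. (\<forall>j\<le>N. odd j \<longrightarrow> c j = 0) \<and>
      ((\<lambda>\<mu>. norm (w 0 (arcsin \<mu>) - (\<Sum>j\<le>N. c j * of_real \<mu> ^ j)) / \<mu> ^ N) \<longlongrightarrow> 0) (at_right 0)" for N
  proof -
    obtain c where c: "\<forall>j\<le>N. odd j \<longrightarrow> c j = 0"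
      "((\<lambda>\<mu>. norm (h_coord_neg h \<theta> \<mu> - (\<Sum>j\<le>N. c j * of_real \<mu> ^ j)) / \<mu> ^ N) \<longlongrightarrow> 0) (at_right 0)"
      using otv unfolding odd_taylor_vanish_def by blast
    have evq: "\<forall>\<^sub>F \<mu> in at_right 0. norm (w 0 (arcsin \<mu>) - (\<Sum>j\<le>N. c j * of_real \<mu> ^ j)) / \<mu> ^ N
        = norm (h_coord_neg h \<theta> \<mu> - (\<Sum>j\<le>N. c j * of_real \<mu> ^ j)) / \<mu> ^ N"
      by (rule eventually_at_rightI[of 0 1]) (use eq in auto)
    have "((\<lambda>\<mu>. norm (w 0 (arcsin \<mu>) - (\<Sum>j\<le>N. c j * of_real \<mu> ^ j)) / \<mu> ^ N) \<longlongrightarrow> 0) (at_right 0)"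
      using c(2) by (rule tendsto_cong[OF evq, THEN iffD2])
    then show ?thesis using c(1) by blast
  qed
  have "w k 0 = 0" by (rule odd_derivs_zero[OF ch tay k])
  then show ?thesis unfolding w_def by simp
qed

lemma bwd_flat1:
  assumes F0: "smooth2 F0" and per: "\<And>\<beta> \<alpha>. \<alpha> \<in> Iplus \<Longrightarrow> F0 (\<beta> + 2*pi, \<alpha>) = F0 (\<beta>, \<alpha>)"
    and par: "\<And>\<theta> k. odd k \<Longrightarrow> (Bop ^^ k) F0 (\<theta>, pi/2) = 0"
  shows "Flat (pi/2) (\<lambda>x. F0 x - F0 (aff pi 1 2 pi 0 (-1) x))"
proof (rule flat_crit)
  define D where "D = (\<lambda>x. F0 x - F0 (aff pi 1 2 pi 0 (-1) x))"
  show sD: "smooth2 (\<lambda>x. F0 x - F0 (aff pi 1 2 pi 0 (-1) x))"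
    by (intro smooth2_diff F0 smooth2_aff)
  fix k \<theta>
  define d where "d = (\<lambda>k t. (Bop ^^ k) D (\<theta> - t, pi/2 + t))"
  define w where "w = (\<lambda>k t. (Bop ^^ k) F0 (\<theta> - t, pi/2 + t))"
  have chd: "chain UNIV d" unfolding d_def D_def by (rule path_chain[OF sD])
  have chw: "chain UNIV w" unfolding w_def by (rule path_chain[OF F0])
  define e where "e = (\<lambda>k t. w k t - ((-1) ^ k) *\<^sub>R w k (- t))"
  have che: "chain UNIV e" unfolding e_def by (rule chain_diff[OF chw chain_refl[OF chw]])
  define dd where "dd = (\<lambda>k t. d k t - e k t)"
  have chdd: "chain UNIV dd" unfolding dd_def by (rule chain_diff[OF chd che])
  have z: "dd 0 t = 0" if "t \<in> {0<..<pi}" for t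
  proof -
    have "dd 0 t = F0 (\<theta> + t, pi/2 - t) - F0 (pi + (\<theta> - t) + 2 * (pi/2 + t), pi - (pi/2 + t))"
      unfolding dd_def d_def e_def w_def D_def aff_def by simp
    also have "\<dots> = F0 (\<theta> + t, pi/2 - t) - F0 ((\<theta> + t) + 2*pi, pi/2 - t)"
      by (simp add: algebra_simps)
    also have "\<dots> = 0" using per[of "pi/2 - t" "\<theta> + t"] that unfolding Iplus_def by simp
    finally show ?thesis .
  qed
  have "dd k 0 = 0"
    by (rule chain_zero[OF chdd open_greaterThanLessThan _ z]) (use pi_gt_zero in auto)
  then have dk: "d k 0 = w k 0 - ((-1) ^ k) *\<^sub>R w k 0" unfolding dd_def e_def by simp
  have "d k 0 = 0"
  proof (cases "odd k")
    case True
    then have "w k 0 = 0" using par[of k \<theta>] unfolding w_def by simp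
    then show ?thesis using dk by simp
  next
    case False
    then show ?thesis using dk by simp
  qed
  then show "(Bop ^^ k) (\<lambda>x. F0 x - F0 (aff pi 1 2 pi 0 (-1) x)) (\<theta>, pi / 2) = 0"
    unfolding d_def D_def by simp
qed

lemma bwd_flat2:
  assumes F0: "smooth2 F0" and per: "\<And>\<beta> \<alpha>. \<alpha> \<in> Iplus \<Longrightarrow> F0 (\<beta> + 2*pi, \<alpha>) = F0 (\<beta>, \<alpha>)"
    and par: "\<And>\<theta> k. odd k \<Longrightarrow> (Bop ^^ k) F0 (\<theta>, -(pi/2)) = 0"
  shows "Flat (-(pi/2)) (\<lambda>x. F0 x - F0 (aff pi 1 2 pi 0 (-1) (sh (2*pi) x)))"
proof (rule flat_crit)
  define D where "D = (\<lambda>x. F0 x - F0 (aff pi 1 2 pi 0 (-1) (sh (2*pi) x)))"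
  have sK: "smooth2 (\<lambda>x. F0 (aff pi 1 2 pi 0 (-1) (sh (2*pi) x)))"
    using smooth2_sh[OF smooth2_aff[OF F0, of pi 1 2 pi 0 "-1"], of "2*pi"] by simp
  show sD: "smooth2 (\<lambda>x. F0 x - F0 (aff pi 1 2 pi 0 (-1) (sh (2*pi) x)))"
    by (intro smooth2_diff F0 sK)
  fix k \<theta>
  define d where "d = (\<lambda>k t. (Bop ^^ k) D (\<theta> - t, -(pi/2) + t))"
  define w where "w = (\<lambda>k t. (Bop ^^ k) F0 (\<theta> - t, -(pi/2) + t))"
  have chd: "chain UNIV d" unfolding d_def D_def by (rule path_chain[OF sD])
  have chw: "chain UNIV w" unfolding w_def by (rule path_chain[OF F0])
  define e where "e = (\<lambda>k t. w k t - ((-1) ^ k) *\<^sub>R w k (- t))"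
  have che: "chain UNIV e" unfolding e_def by (rule chain_diff[OF chw chain_refl[OF chw]])
  define dd where "dd = (\<lambda>k t. d k t - e k t)"
  have chdd: "chain UNIV dd" unfolding dd_def by (rule chain_diff[OF chd che])
  have per4': "F0 (\<beta> + 4*pi, \<alpha>) = F0 (\<beta>, \<alpha>)" if "\<alpha> \<in> Iplus" for \<beta> \<alpha>
    using per[OF that, of "\<beta> + 2*pi"] per[OF that, of \<beta>] by (simp add: algebra_simps)
  have z: "dd 0 t = 0" if "t \<in> {-pi<..<0}" for t
  proof -
    define P1 where "P1 = (\<theta> - (- t), -(pi/2) + (- t))"
    define P2 where "P2 = aff pi 1 2 pi 0 (-1) (sh (2*pi) (\<theta> - t, -(pi/2) + t))"
    have "dd 0 t = F0 P1 - F0 P2"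
      unfolding dd_def d_def e_def w_def D_def P1_def P2_def by simp
    moreover have "P1 = (\<theta> + t, -(pi/2) - t)" unfolding P1_def by simp
    moreover have "P2 = ((\<theta> + t) + 4*pi, -(pi/2) - t)"
      unfolding P2_def aff_def sh_def prod_eq_iff fst_conv snd_conv by (intro conjI; (simp add: algebra_simps | simp add: field_simps | smt (verit)))
    ultimately have "dd 0 t = F0 (\<theta> + t, -(pi/2) - t) - F0 ((\<theta> + t) + 4*pi, -(pi/2) - t)" by simp
    also have "\<dots> = 0" using per4'[of "-(pi/2) - t" "\<theta> + t"] that unfolding Iplus_def by simp
    finally show ?thesis .
  qed
  have "dd k 0 = 0"
    by (rule chain_zero[OF chdd open_greaterThanLessThan _ z]) (use pi_gt_zero in auto)
  then have dk: "d k 0 = w k 0 - ((-1) ^ k) *\<^sub>R w k 0" unfolding dd_def e_def by simp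
  have "d k 0 = 0"
  proof (cases "odd k")
    case True
    then have "w k 0 = 0" using par[of k \<theta>] unfolding w_def by simp
    then show ?thesis using dk by simp
  next
    case False
    then show ?thesis using dk by simp
  qed
  then show "(Bop ^^ k) (\<lambda>x. F0 x - F0 (aff pi 1 2 pi 0 (-1) (sh (2*pi) x))) (\<theta>, -(pi / 2)) = 0"
    unfolding d_def D_def by simp
qed

lemma A_glue:
  assumes uF: "\<And>\<beta> \<alpha>. \<alpha> \<in> Iplus \<Longrightarrow> F0 (\<beta>, \<alpha>) = u \<beta> \<alpha>"
  shows "A_plus u \<beta> \<alpha> = Glue F0 (\<lambda>x. F0 (aff pi 1 2 pi 0 (-1) x)) (\<beta>, \<alpha>)"
proof -
  define a where "a = alpha_rep \<alpha>"
  have ab: "-(pi/2) \<le> a" "a < 3*pi/2" using alpha_rep_bounds unfolding a_def by auto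
  show ?thesis
  proof (cases "a \<le> pi/2")
    case True
    then show ?thesis unfolding A_plus_def Glue_at a_def[symmetric] Let_def
      using uF[of a \<beta>] ab by (simp add: Iplus_def)
  next
    case False
    have "F0 (aff pi 1 2 pi 0 (-1) (\<beta>, a)) = u (\<beta> + pi + 2 * a) (pi - a)"
    proof -
      have "aff pi 1 2 pi 0 (-1) (\<beta>, a) = (\<beta> + pi + 2 * a, pi - a)" unfolding aff_def by simp
      moreover have "pi - a \<in> Iplus" using False ab unfolding Iplus_def by auto
      ultimately show ?thesis using uF by simp
    qed
    then show ?thesis unfolding A_plus_def Glue_at a_def[symmetric] Let_def SE_def
      using False by simp
  qed
qed

lemma alpha_rep_per: "alpha_rep (\<alpha> + 2*pi) = alpha_rep \<alpha>"
proof -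
  define k where "k = \<lfloor>(\<alpha> + pi / 2) / (2 * pi)\<rfloor>"
  have a: "alpha_rep \<alpha> = \<alpha> - 2 * pi * of_int k" unfolding alpha_rep_def k_def by simp
  have ab: "-(pi/2) \<le> alpha_rep \<alpha>" "alpha_rep \<alpha> < 3*pi/2" using alpha_rep_bounds by auto
  have "alpha_rep (\<alpha> + 2*pi) = (\<alpha> + 2*pi) - 2 * pi * of_int (k + 1)"
    by (rule alpha_rep_eq) (use a ab in \<open>simp_all add: algebra_simps\<close>)
  then show ?thesis using a by (simp add: algebra_simps)
qed

lemma A_per:
  assumes cp: "Cinf_plus u"
  shows "A_plus u (\<beta> + 2*pi) \<alpha> = A_plus u \<beta> \<alpha>" "A_plus u \<beta> (\<alpha> + 2*pi) = A_plus u \<beta> \<alpha>"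
proof -
  define a where "a = alpha_rep \<alpha>"
  have ab: "-(pi/2) \<le> a" "a < 3*pi/2" using alpha_rep_bounds unfolding a_def by auto
  show "A_plus u (\<beta> + 2*pi) \<alpha> = A_plus u \<beta> \<alpha>"
  proof (cases "a \<le> pi/2")
    case True
    then show ?thesis unfolding A_plus_def a_def[symmetric] Let_def
      using per2[OF cp, of a \<beta>] ab by (simp add: Iplus_def)
  next
    case False
    have "pi - a \<in> Iplus" using False ab unfolding Iplus_def by auto
    then have "u (\<beta> + pi + 2 * a + 2 * pi) (pi - a) = u (\<beta> + pi + 2 * a) (pi - a)"
      using per2[OF cp] by blast
    then show ?thesis unfolding A_plus_def a_def[symmetric] Let_def SE_def
      using False by (simp add: algebra_simps)
  qed
  show "A_plus u \<beta> (\<alpha> + 2*pi) = A_plus u \<beta> \<alpha>"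
    unfolding A_plus_def alpha_rep_per ..
qed

theorem main_result:
  fixes h :: "real \<Rightarrow> ereal \<Rightarrow> complex"
  assumes periodic: "\<forall>\<beta> a. h (\<beta> + 2 * pi) a = h \<beta> a"
  shows "Cinf_alpha_plus_GH h \<longleftrightarrow>
           (Cinf_GH h
            \<and> (\<forall>\<beta> a. h \<beta> a = case_prod h (SAH (\<beta>, a)))
            \<and> odd_taylor_vanish (h_coord_pos h)
            \<and> odd_taylor_vanish (h_coord_neg h))"
proof
  assume "Cinf_alpha_plus_GH h"
  then obtain u where u: "Cinf_alpha_plus u" and hu0: "\<forall>\<beta> a. h \<beta> a = case_prod u (Psi_hf (\<beta>, a))"
    unfolding Cinf_alpha_plus_GH_def by blast
  have hu: "h \<beta> a = u \<beta> (atan_e a)" for \<beta> a using hu0 unfolding Psi_hf_def by simp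
  have cp: "Cinf_plus u" and tor: "Cinf_torus (A_plus u)"
    and sea: "\<forall>\<beta> \<alpha>. \<alpha> \<in> Iplus \<longrightarrow> case_prod u (SEA (\<beta>, \<alpha>)) = u \<beta> \<alpha>"
    using u unfolding Cinf_alpha_plus_def Cinf_alpha_def by auto
  obtain F where F: "smooth2 F" and FA: "\<And>\<beta> \<alpha>. F (\<beta>, \<alpha>) = A_plus u \<beta> \<alpha>"
    using tor unfolding Cinf_torus_def by blast
  have "Cinf_GH h" unfolding Cinf_GH_def using cp hu0 by blast
  moreover have "\<forall>\<beta> a. h \<beta> a = case_prod h (SAH (\<beta>, a))"
  proof (intro allI)
    fix \<beta> a
    have "atan_e a \<in> Iplus" by (rule atan_e_bounds)
    then have "u (\<beta> + pi + 2 * atan_e a) (- atan_e a) = u \<beta> (atan_e a)"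
      using sea unfolding SEA_def by auto
    then show "h \<beta> a = case_prod h (SAH (\<beta>, a))"
      unfolding SAH_def by (simp add: hu atan_e_minus)
  qed
  moreover have "odd_taylor_vanish (h_coord_pos h)" by (rule fwd_pos[OF cp F FA hu])
  moreover have "odd_taylor_vanish (h_coord_neg h)" by (rule fwd_neg[OF cp F FA hu])
  ultimately show "Cinf_GH h \<and> (\<forall>\<beta> a. h \<beta> a = case_prod h (SAH (\<beta>, a)))
      \<and> odd_taylor_vanish (h_coord_pos h) \<and> odd_taylor_vanish (h_coord_neg h)" by blast
next
  assume R: "Cinf_GH h \<and> (\<forall>\<beta> a. h \<beta> a = case_prod h (SAH (\<beta>, a)))
      \<and> odd_taylor_vanish (h_coord_pos h) \<and> odd_taylor_vanish (h_coord_neg h)"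
  then obtain u where cp: "Cinf_plus u" and hu0: "\<forall>\<beta> a. h \<beta> a = case_prod u (Psi_hf (\<beta>, a))"
    unfolding Cinf_GH_def by blast
  have hu: "h \<beta> a = u \<beta> (atan_e a)" for \<beta> a using hu0 unfolding Psi_hf_def by simp
  have sah: "\<And>\<beta> a. h \<beta> a = case_prod h (SAH (\<beta>, a))" and otp: "odd_taylor_vanish (h_coord_pos h)"
    and otn: "odd_taylor_vanish (h_coord_neg h)" using R by auto
  obtain F0 where F0: "smooth2 F0" and uF': "\<forall>\<beta> \<alpha>. \<alpha> \<in> Iplus \<longrightarrow> F0 (\<beta>, \<alpha>) = u \<beta> \<alpha>"
    using cp unfolding Cinf_plus_def by blast
  have uF: "\<And>\<beta> \<alpha>. \<alpha> \<in> Iplus \<Longrightarrow> F0 (\<beta>, \<alpha>) = u \<beta> \<alpha>" using uF' by blast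
  have per: "F0 (\<beta> + 2*pi, \<alpha>) = F0 (\<beta>, \<alpha>)" if "\<alpha> \<in> Iplus" for \<beta> \<alpha>
    using uF[OF that] per2[OF cp that] by simp
  have par1: "(Bop ^^ k) F0 (\<theta>, pi/2) = 0" if "odd k" for \<theta> k
    by (rule bwd_pos_parity[OF F0 uF hu otp that])
  have par2: "(Bop ^^ k) F0 (\<theta>, -(pi/2)) = 0" if "odd k" for \<theta> k
    by (rule bwd_neg_parity[OF F0 uF hu otn that])
  have gc: "GCond F0 (\<lambda>x. F0 (aff pi 1 2 pi 0 (-1) x))"
    unfolding GCond_def using F0 smooth2_aff[OF F0] bwd_flat1[OF F0 per par1] bwd_flat2[OF F0 per par2] by blast
  have tor: "Cinf_torus (A_plus u)"
    unfolding Cinf_torus_def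
  proof (intro conjI)
    show "\<forall>\<beta> \<alpha>. A_plus u (\<beta> + 2 * pi) \<alpha> = A_plus u \<beta> \<alpha> \<and> A_plus u \<beta> (\<alpha> + 2 * pi) = A_plus u \<beta> \<alpha>"
      using A_per[OF cp] by blast
    show "\<exists>F. smooth2 F \<and> (\<forall>\<beta> \<alpha>. F (\<beta>, \<alpha>) = A_plus u \<beta> \<alpha>)"
    proof (intro exI[of _ "Glue F0 (\<lambda>x. F0 (aff pi 1 2 pi 0 (-1) x))"] conjI allI)
      show "smooth2 (Glue F0 (\<lambda>x. F0 (aff pi 1 2 pi 0 (-1) x)))" by (rule Glue_smooth[OF gc])
      fix \<beta> \<alpha>
      show "Glue F0 (\<lambda>x. F0 (aff pi 1 2 pi 0 (-1) x)) (\<beta>, \<alpha>) = A_plus u \<beta> \<alpha>"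
        using A_glue[of F0 u, OF uF] by simp
    qed
  qed
  have sea: "\<forall>\<beta> \<alpha>. \<alpha> \<in> Iplus \<longrightarrow> case_prod u (SEA (\<beta>, \<alpha>)) = u \<beta> \<alpha>"
  proof (intro allI impI)
    fix \<beta> \<alpha> assume "\<alpha> \<in> Iplus"
    then obtain a where a: "atan_e a = \<alpha>" using atan_e_surj by blast
    have "h \<beta> a = case_prod h (SAH (\<beta>, a))" by (rule sah)
    then show "case_prod u (SEA (\<beta>, \<alpha>)) = u \<beta> \<alpha>"
      unfolding SAH_def SEA_def using a by (simp add: hu atan_e_minus)
  qed
  show "Cinf_alpha_plus_GH h"
    unfolding Cinf_alpha_plus_GH_def Cinf_alpha_plus_def Cinf_alpha_def
    using cp tor sea hu0 by blast
qed


theorem lemma2p1: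
  fixes h :: "real \<Rightarrow> ereal \<Rightarrow> complex"
  assumes periodic: "\<forall>\<beta> a. h (\<beta> + 2 * pi) a = h \<beta> a"
  shows "Cinf_alpha_plus_GH h \<longleftrightarrow>
           (Cinf_GH h
            \<and> (\<forall>\<beta> a. h \<beta> a = case_prod h (SAH (\<beta>, a)))
            \<and> odd_taylor_vanish (h_coord_pos h)
            \<and> odd_taylor_vanish (h_coord_neg h))"
  by (rule main_result[OF periodic])

end
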